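(* Let $S=S(c,r)\subset\mathbb{R}^{n+1}$ be an $n$-dimensional sphere and $\mathcal{V}=\{V_1,\dots,V_s\}$ a finite collection of codimension-one affine subspaces containing $c$. Let $\boldsymbol{\epsilon}=(\epsilon_0,\dots,\epsilon_{n-1})$ decrease sufficiently rapidly and prevent improper tube interference with respect to $(S,\mathcal{V})$. Then for each $x\in\bigcup_{j<n}\mathbf{T}_j$ there is a largest integer $k(x)$ with $0\le k(x)\le n-1$ for which there exist a great sphere $S_\alpha$ with $\dim S_\alpha=k(x)$ and a point $z\in S_\alpha$ such that $x\in F_\alpha(z,\epsilon_{k(x)})$ and $$\partial_{rel}F_\alpha(z,\epsilon_{k(x)})\cap(\mathbf{T}_0\cup\mathbf{T}_1\cup\dots\cup\mathbf{T}_{k(x)-1})=\emptyset$$ (the union being empty when $k(x)=0$). Moreover, the $(\alpha,\epsilon_{k(x)})$-spherical cap with top at $z$ containing $x$ with these properties is unique (i.e. the great sphere $S_\alpha$ and the point $z$ are uniquely determined by $x$).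
   Context: Notation. For $x\in S$, $\mathcal{V}_x=\{V_i\in\mathcal{V}: x\in V_i\}$. For $\alpha\subset\{1,\dots,s\}$: $V_\alpha=\bigcap_{i\in\alpha}V_i$ ($V_\emptyset=\mathbb{R}^{n+1}$), $S_\alpha=S\cap V_\alpha$ (a great sphere; $\dim S_\alpha=\dim V_\alpha-1$), and $W_\alpha$ is the linear subspace orthogonal to the direction space of $V_\alpha$. $U_\epsilon(A)$ is the open $\epsilon$-neighborhood of $A$. Tubular neighborhood: $T_\epsilon(S_\alpha)=\{p\in S: p-c=a+u,\ a\in V_\alpha-c,\ u\in W_\alpha,\ \|u\|<\epsilon\}$. Spherical cap with top $z\in S_\alpha$: $F_\alpha(z,\epsilon)=\{p\in S: p-c=t(z-c)+u,\ t>0,\ u\in W_\alpha,\ \|u\|<\epsilon\}$, with relative boundary $\partial_{rel}F_\alpha(z,\epsilon)$ defined the same way with $\|u\|=\epsilon$. For $j=0,\dots,n-1$, $\mathbf{T}_j=\mathbf{T}_j(\epsilon_j)=\bigcup_{\dim S_\alpha=j}T_{\epsilon_j}(S_\alpha)$. Set $\Omega_0=\bigcup_{\dim S_\alpha=0}S_\alpha$ and, for $k=1,\dots,n$, $\Omega_k=\big(\bigcup_{\dim S_\alpha=k}S_\alpha\big)\setminus\bigcup_{j<k}\mathbf{T}_j(\epsilon_j)$; $\Omega=\bigcup_{k\le n}\Omega_k$. Let $\tau=\sqrt{2-2\sqrt{2/3}}\,/8$. The tuple $\boldsymbol{\epsilon}$ of positive numbers decreases sufficiently rapidly and prevents improper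 tube interference if (1) $\epsilon_0\le\tau r$ and $\epsilon_k/\epsilon_{k-1}\le\tau$ for $k>0$; and (2) for every $0\le k\le n-1$, every $\omega\in\Omega_k$ and every $\alpha$ such that $V_\alpha\subset V_i$ for some $V_i\in\mathcal{V}$ with $V_i\notin\mathcal{V}_\omega$, one has $U_{8\epsilon_k}(\omega)\cap T_{\epsilon_k}(S_\alpha)=\emptyset$. *)

theory Defs
  imports "HOL-Analysis.Analysis"
begin

text \<open>A subcollection A \<subseteq> VV plays the role of
 the index set alpha; V_alpha = \<Inter>A (with \<Inter>{} = UNIV).\<close>

definition Valpha :: "'a set set \<Rightarrow> 'a set" where
  "Valpha A = \<Inter>A"

definition Salpha :: "'a::euclidean_space \<Rightarrow> real \<Rightarrow> 'a set set \<Rightarrow> 'a set" where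
  "Salpha c r A = sphere c r \<inter> Valpha A"

text \<open>dim S_alpha = dim V_alpha - 1\<close>
definition gdim :: "'a::euclidean_space set set \<Rightarrow> int" where
  "gdim A = aff_dim (Valpha A) - 1"

definition Lalpha :: "'a::euclidean_space \<Rightarrow> 'a set set \<Rightarrow> 'a set" where
  "Lalpha c A = (\<lambda>x. x - c) ` Valpha A"

definition Walpha :: "'a::euclidean_space \<Rightarrow> 'a set set \<Rightarrow> 'a set" where
  "Walpha c A = {u. \<forall>a\<in>Lalpha c A. inner a u = 0}"

definition tube :: "'a::euclidean_space \<Rightarrow> real \<Rightarrow> 'a set set \<Rightarrow> real \<Rightarrow> 'a set" where
  "tube c r A e = {p \<in> sphere c r. \<exists>a u. p - c = a + u \<and> a \<in> Lalpha c A \<and> u \<in> Walpha c A \<and> norm u < e}"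

definition cap :: "'a::euclidean_space \<Rightarrow> real \<Rightarrow> 'a set set \<Rightarrow> 'a \<Rightarrow> real \<Rightarrow> 'a set" where
  "cap c r A z e = {p \<in> sphere c r. \<exists>t u. t > 0 \<and> p - c = t *\<^sub>R (z - c) + u \<and> u \<in> Walpha c A \<and> norm u < e}"

definition cap_rel_boundary :: "'a::euclidean_space \<Rightarrow> real \<Rightarrow> 'a set set \<Rightarrow> 'a \<Rightarrow> real \<Rightarrow> 'a set" where
  "cap_rel_boundary c r A z e = {p \<in> sphere c r. \<exists>t u. t > 0 \<and> p - c = t *\<^sub>R (z - c) + u \<and> u \<in> Walpha c A \<and> norm u = e}"

definition bigT :: "'a::euclidean_space \<Rightarrow> real \<Rightarrow> 'a set set \<Rightarrow> (nat \<Rightarrow> real) \<Rightarrow> nat \<Rightarrow> 'a set" where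
  "bigT c r VV eps j = \<Union>{tube c r A (eps j) | A. A \<subseteq> VV \<and> gdim A = int j}"

definition Omega :: "'a::euclidean_space \<Rightarrow> real \<Rightarrow> 'a set set \<Rightarrow> (nat \<Rightarrow> real) \<Rightarrow> nat \<Rightarrow> 'a set" where
  "Omega c r VV eps k = \<Union>{Salpha c r A | A. A \<subseteq> VV \<and> gdim A = int k} - (\<Union>j<k. bigT c r VV eps j)"

definition Vx :: "'a set set \<Rightarrow> 'a \<Rightarrow> 'a set set" where
  "Vx VV x = {V \<in> VV. x \<in> V}"

definition tau :: real where
  "tau = sqrt (2 - 2 * sqrt (2/3)) / 8"

definition good_eps :: "'a::euclidean_space \<Rightarrow> real \<Rightarrow> 'a set set \<Rightarrow> nat \<Rightarrow> (nat \<Rightarrow> real) \<Rightarrow> bool" where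
  "good_eps c r VV n eps \<longleftrightarrow>
     (\<forall>k<n. eps k > 0) \<and>
     eps 0 \<le> tau * r \<and> (\<forall>k. 0 < k \<and> k < n \<longrightarrow> eps k / eps (k - 1) \<le> tau) \<and>
     (\<forall>k<n. \<forall>\<omega>\<in>Omega c r VV eps k. \<forall>A. A \<subseteq> VV \<and> (\<exists>V\<in>VV. Valpha A \<subseteq> V \<and> V \<notin> Vx VV \<omega>) \<longrightarrow>
         ball \<omega> (8 * eps k) \<inter> tube c r A (eps k) = {})"

definition cap_prop :: "'a::euclidean_space \<Rightarrow> real \<Rightarrow> 'a set set \<Rightarrow> (nat \<Rightarrow> real) \<Rightarrow> 'a \<Rightarrow> nat \<Rightarrow> 'a set set \<Rightarrow> 'a \<Rightarrow> bool" where
  "cap_prop c r VV eps x k A z \<longleftrightarrow>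
     A \<subseteq> VV \<and> gdim A = int k \<and> z \<in> Salpha c r A \<and> x \<in> cap c r A z (eps k) \<and>
     cap_rel_boundary c r A z (eps k) \<inter> (\<Union>j<k. bigT c r VV eps j) = {}"

end

theory Submission
  imports Defs
begin


definition pr :: "'a::euclidean_space set \<Rightarrow> 'a \<Rightarrow> 'a" where
  "pr L x = (SOME a. a \<in> L \<and> (\<forall>l\<in>L. inner l (x - a) = 0))"

definition qn :: "'a::euclidean_space set \<Rightarrow> 'a \<Rightarrow> real" where
  "qn L x = norm (x - pr L x)"

lemma pyth: "inner a b = 0 \<Longrightarrow> (norm (a + b))\<^sup>2 = (norm a)\<^sup>2 + (norm b)\<^sup>2"
  by (simp add: norm_add_Pythagorean orthogonal_def)

lemma pr_ex:
  fixes L :: "'a::euclidean_space set"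
  assumes "subspace L"
  shows "\<exists>a. a \<in> L \<and> (\<forall>l\<in>L. inner l (x - a) = 0)"
proof -
  obtain y z where "y \<in> span L" "\<And>w. w \<in> span L \<Longrightarrow> orthogonal z w" "x = y + z"
    using orthogonal_subspace_decomp_exists[of L x] by metis
  moreover have "span L = L" using assms by simp
  ultimately show ?thesis
    by (intro exI[of _ y]) (auto simp: orthogonal_def inner_commute)
qed

lemma pr:
  assumes "subspace L"
  shows "pr L x \<in> L" "\<And>l. l \<in> L \<Longrightarrow> inner l (x - pr L x) = 0"
  using someI_ex[OF pr_ex[OF assms, of x]] unfolding pr_def by auto

lemma pr_unique:
  assumes L: "subspace L" and a: "a \<in> L" and o: "\<And>l. l \<in> L \<Longrightarrow> inner l (x - a) = 0"
  shows "pr L x = a"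
proof -
  let ?b = "pr L x"
  have d: "a - ?b \<in> L" using pr(1)[OF L] a L by (simp add: subspace_diff)
  have "inner (a - ?b) (x - a) = 0" using o[OF d] .
  moreover have "inner (a - ?b) (x - ?b) = 0" using pr(2)[OF L d] .
  ultimately have "inner (a - ?b) (a - ?b) = 0"
    by (smt (verit, ccfv_threshold) diff_diff_eq2 inner_diff_right)
  then show ?thesis by simp
qed

lemma pr_add:
  assumes L: "subspace L" shows "pr L (x + y) = pr L x + pr L y"
  apply (rule pr_unique[OF L])
  using pr[OF L] L apply (simp add: subspace_add)
  using pr(2)[OF L, of _ x] pr(2)[OF L, of _ y] by (simp add: algebra_simps inner_add_right inner_diff_right)

lemma pr_scale:
  assumes L: "subspace L" shows "pr L (s *\<^sub>R x) = s *\<^sub>R pr L x"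
  apply (rule pr_unique[OF L])
  using pr[OF L] L apply (simp add: subspace_scale)
  using pr(2)[OF L, of _ x] by (simp add: algebra_simps inner_diff_right flip: scaleR_diff_right)

lemma pr_in:
  assumes L: "subspace L" and "x \<in> L" shows "pr L x = x"
  by (rule pr_unique[OF L]) (use assms in auto)

lemma pr_orth:
  assumes L: "subspace L" and "\<And>l. l \<in> L \<Longrightarrow> inner l x = 0" shows "pr L x = 0"
  by (rule pr_unique[OF L]) (use assms subspace_0 in auto)

lemma pr_sub:
  assumes L: "subspace L" and L': "subspace L'" and sub: "L' \<subseteq> L"
  shows "pr L' (pr L x) = pr L' x"
proof (rule pr_unique[OF L'])
  show "pr L' x \<in> L'" using pr[OF L'] by auto
  fix l assume l: "l \<in> L'"
  have "pr L x - pr L' x = (x - pr L' x) - (x - pr L x)" by simp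
  then have "inner l (pr L x - pr L' x) = inner l (x - pr L' x) - inner l (x - pr L x)"
    by (simp add: inner_diff_right)
  also have "\<dots> = 0" using pr(2)[OF L' l] pr(2)[OF L, of l x] l sub by auto
  finally show "inner l (pr L x - pr L' x) = 0" .
qed

lemma pr_orth_rest:
  assumes L: "subspace L" shows "inner (pr L x) (x - pr L x) = 0"
  using pr[OF L] by auto

lemma norm_split:
  assumes L: "subspace L" shows "(norm x)\<^sup>2 = (norm (pr L x))\<^sup>2 + (qn L x)\<^sup>2"
proof -
  have "x = pr L x + (x - pr L x)" by simp
  then have "(norm x)\<^sup>2 = (norm (pr L x + (x - pr L x)))\<^sup>2" by simp
  also have "\<dots> = (norm (pr L x))\<^sup>2 + (norm (x - pr L x))\<^sup>2"
    using pr_orth_rest[OF L, of x] by (rule pyth)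
  finally show ?thesis by (simp add: qn_def)
qed

lemma qn_le_norm:
  assumes L: "subspace L" shows "qn L x \<le> norm x"
  using norm_split[OF L, of x]
  by (smt (verit) norm_ge_zero power2_le_imp_le qn_def zero_le_power2)

lemma qn_nonneg: "qn L x \<ge> 0" by (simp add: qn_def)

lemma qn_diff:
  assumes L: "subspace L" shows "x - pr L x - (y - pr L y) = (x - y) - pr L (x - y)"
  using pr_add[OF L, of "x - y" y] by (simp add: algebra_simps)

lemma qn_lip:
  assumes L: "subspace L" shows "qn L x \<le> qn L y + norm (x - y)"
proof -
  have "qn L x = norm ((y - pr L y) + ((x - y) - pr L (x - y)))"
    unfolding qn_def using qn_diff[OF L, of x y] by (metis add_diff_cancel_left' diff_add_cancel)
  also have "\<dots> \<le> qn L y + qn L (x - y)" unfolding qn_def by (rule norm_triangle_ineq)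
  also have "\<dots> \<le> qn L y + norm (x - y)" using qn_le_norm[OF L] by simp
  finally show ?thesis .
qed

lemma qn_scale:
  assumes L: "subspace L" shows "qn L (s *\<^sub>R x) = \<bar>s\<bar> * qn L x"
  unfolding qn_def pr_scale[OF L] by (simp flip: scaleR_diff_right)

lemma qn_in:
  assumes L: "subspace L" and "x \<in> L" shows "qn L x = 0"
  unfolding qn_def using pr_in[OF assms] by simp

lemma qn_zero_iff:
  assumes L: "subspace L" shows "qn L x = 0 \<longleftrightarrow> x \<in> L"
  using pr[OF L] qn_in[OF L] unfolding qn_def by (metis eq_iff_diff_eq_0 norm_eq_zero)

lemma qn_orth:
  assumes L: "subspace L" and "\<And>l. l \<in> L \<Longrightarrow> inner l x = 0" shows "qn L x = norm x"
  unfolding qn_def using pr_orth[OF assms] by simp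

lemma qn_le_dist:
  assumes L: "subspace L" and l: "l \<in> L" shows "qn L x \<le> norm (x - l)"
proof -
  have "pr L x - l \<in> L" using pr[OF L] l L by (simp add: subspace_diff)
  then have o: "inner (x - pr L x) (pr L x - l) = 0" using pr(2)[OF L, of "pr L x - l" x] by (simp add: inner_commute)
  have "x - l = (x - pr L x) + (pr L x - l)" by simp
  moreover have "(norm ((x - pr L x) + (pr L x - l)))\<^sup>2 = (norm (x - pr L x))\<^sup>2 + (norm (pr L x - l))\<^sup>2"
    using o by (rule pyth)
  ultimately have "(norm (x - l))\<^sup>2 = (norm (x - pr L x))\<^sup>2 + (norm (pr L x - l))\<^sup>2" by simp
  then have "(qn L x)\<^sup>2 \<le> (norm (x - l))\<^sup>2" by (simp add: qn_def)
  then show ?thesis by (simp add: abs_le_square_iff qn_def)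
qed

lemma qn_sub:
  assumes L': "subspace L'" and M: "subspace M" and sub: "L' \<subseteq> M" and m: "m \<in> M"
    and v: "\<And>x. x \<in> M \<Longrightarrow> inner x v = 0"
  shows "(qn L' (m + v))\<^sup>2 = (qn L' m)\<^sup>2 + (norm v)\<^sup>2"
proof -
  have pv: "pr L' v = 0" using pr_orth[OF L'] v sub by auto
  have eq: "m + v - pr L' (m + v) = (m - pr L' m) + v" using pr_add[OF L', of m v] pv by simp
  have "m - pr L' m \<in> M" using pr[OF L'] sub m M by (meson subsetD subspace_diff)
  then have "inner (m - pr L' m) v = 0" using v by auto
  then show ?thesis unfolding qn_def eq by (rule pyth)
qed

lemma qn_sup:
  assumes L': "subspace L'" and sub: "M \<subseteq> L'" and m: "m \<in> M"
  shows "qn L' (m + v) = qn L' v"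
  unfolding qn_def using pr_add[OF L', of m v] pr_in[OF L', of m] m sub by auto




lemma radial_aux:
  fixes na q r :: real
  assumes r: "r > 0" and na: "na > 0" and sp: "r\<^sup>2 = na\<^sup>2 + q\<^sup>2"
  shows "(r - na)\<^sup>2 \<le> q^4 / r\<^sup>2" "na \<le> r"
proof -
  have le: "na\<^sup>2 \<le> r\<^sup>2" using sp by (smt (verit) zero_le_power2)
  then show ar: "na \<le> r" using power2_le_imp_le[OF le] r by simp
  have e1: "(r - na) * (r + na) = q\<^sup>2" using sp by (simp add: algebra_simps power2_eq_square)
  have "(r - na) * r \<le> (r - na) * (r + na)" using ar na by (simp add: mult_left_mono)
  then have "(r - na) * r \<le> q\<^sup>2" using e1 by simp
  then have "r - na \<le> q\<^sup>2 / r" using r by (simp add: field_simps)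
  moreover have "0 \<le> r - na" using ar by simp
  ultimately have "(r - na)\<^sup>2 \<le> (q\<^sup>2 / r)\<^sup>2" by (simp add: power_mono)
  moreover have "(q\<^sup>2 / r)\<^sup>2 = q^4 / r\<^sup>2"
    by (simp add: power_divide flip: power_mult)
  ultimately show "(r - na)\<^sup>2 \<le> q^4 / r\<^sup>2" by simp
qed

lemma radial:
  fixes Y :: "'a::euclidean_space"
  assumes L: "subspace L" and nY: "norm Y = r" and q: "qn L Y < r"
  shows "pr L Y \<noteq> 0" "(r / norm (pr L Y)) *\<^sub>R pr L Y \<in> L" "norm ((r / norm (pr L Y)) *\<^sub>R pr L Y) = r"
    "(norm (Y - (r / norm (pr L Y)) *\<^sub>R pr L Y))\<^sup>2 \<le> (qn L Y)\<^sup>2 + (qn L Y)^4 / r\<^sup>2"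
proof -
  define a where "a = pr L Y"
  have r: "r > 0" using q qn_nonneg[of L Y] by linarith
  have sp: "r\<^sup>2 = (norm a)\<^sup>2 + (qn L Y)\<^sup>2" using norm_split[OF L, of Y] nY a_def by simp
  have "(qn L Y)\<^sup>2 < r\<^sup>2" using q qn_nonneg[of L Y] by (rule power_strict_mono) auto
  then have "(norm a)\<^sup>2 > 0" using sp by (smt (verit) zero_le_power2)
  then have na: "norm a > 0" by simp
  then show "pr L Y \<noteq> 0" using a_def by auto
  show "(r / norm (pr L Y)) *\<^sub>R pr L Y \<in> L" using pr[OF L] L by (simp add: subspace_scale)
  show "norm ((r / norm (pr L Y)) *\<^sub>R pr L Y) = r" using na r a_def by simp
  have e: "Y - (r / norm a) *\<^sub>R a = (Y - a) + (1 - r / norm a) *\<^sub>R a" by (simp add: algebra_simps)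
  have o: "inner (Y - a) ((1 - r / norm a) *\<^sub>R a) = 0"
    using pr_orth_rest[OF L, of Y] a_def by (simp add: inner_commute)
  have "(norm (Y - (r / norm a) *\<^sub>R a))\<^sup>2 = (norm (Y - a))\<^sup>2 + (norm ((1 - r / norm a) *\<^sub>R a))\<^sup>2"
    unfolding e using o by (rule pyth)
  also have "norm (Y - a) = qn L Y" by (simp add: qn_def a_def)
  also have "norm ((1 - r / norm a) *\<^sub>R a) = r - norm a"
  proof -
    have ar: "norm a \<le> r" using radial_aux[OF r na sp] by simp
    have m: "(1 - r / norm a) * norm a = norm a - r" using na by (simp add: field_simps)
    have "norm ((1 - r / norm a) *\<^sub>R a) = \<bar>1 - r / norm a\<bar> * norm a" by simp
    also have "\<dots> = \<bar>(1 - r / norm a) * norm a\<bar>" using na by (simp add: abs_mult)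
    also have "\<dots> = r - norm a" using m ar by simp
    finally show ?thesis .
  qed
  also have "(r - norm a)\<^sup>2 \<le> (qn L Y)^4 / r\<^sup>2" using radial_aux[OF r na sp] by simp
  finally show "(norm (Y - (r / norm (pr L Y)) *\<^sub>R pr L Y))\<^sup>2 \<le> (qn L Y)\<^sup>2 + (qn L Y)^4 / r\<^sup>2"
    using a_def by simp
qed



lemma mono_arith:
  fixes R Q U U' a b X2 P2 :: real
  assumes R: "R > 0" and Q: "0 \<le> Q" "Q \<le> R" and U: "0 \<le> U" "U \<le> U'"
    and ha: "a * R + U = R" and hb: "b * R + U' = R" and X2: "X2 = a * Q + U" and P2: "P2 = b * Q + U'"
  shows "X2 \<le> P2" "P2 \<le> X2 + U'"
proof -
  have "R * X2 = (a * R) * Q + R * U" using X2 by (simp add: algebra_simps)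
  also have "a * R = R - U" using ha by simp
  finally have e1: "R * X2 = (R - U) * Q + R * U" .
  have "R * P2 = (b * R) * Q + R * U'" using P2 by (simp add: algebra_simps)
  also have "b * R = R - U'" using hb by simp
  finally have e2: "R * P2 = (R - U') * Q + R * U'" .
  have "R * (P2 - X2) = (U' - U) * (R - Q)" using e1 e2 by (simp add: algebra_simps)
  moreover have "0 \<le> (U' - U) * (R - Q)" using U Q by simp
  moreover have "(U' - U) * (R - Q) \<le> U' * R" 
  proof -
    have "(U' - U) * (R - Q) \<le> U' * (R - Q)" using U Q by (simp add: mult_right_mono)
    also have "\<dots> \<le> U' * R" using U Q by (simp add: mult_left_mono)
    finally show ?thesis .
  qed
  ultimately have "0 \<le> R * (P2 - X2)" "R * (P2 - X2) \<le> R * U'" by (simp_all add: mult.commute)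
  then show "X2 \<le> P2" "P2 \<le> X2 + U'" using R
    by (simp_all add: zero_le_mult_iff mult_le_cancel_left_pos)
qed

lemma mono_cap:
  fixes Z X P u u' :: "'a::euclidean_space"
  assumes L': "subspace L'" and L: "subspace L" and sub: "L' \<subseteq> L" and Z: "Z \<in> L" and nZ: "norm Z = r"
    and r: "r > 0"
    and uo: "\<And>l. l \<in> L \<Longrightarrow> inner l u = 0" and u'o: "\<And>l. l \<in> L \<Longrightarrow> inner l u' = 0"
    and X: "X = t *\<^sub>R Z + u" and nX: "norm X = r" and P: "P = t' *\<^sub>R Z + u'" and nP: "norm P = r"
    and le: "norm u \<le> norm u'"
  shows "qn L' X \<le> qn L' P" "(qn L' P)\<^sup>2 \<le> (qn L' X)\<^sup>2 + (norm u')\<^sup>2"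
proof -
  have tZ: "t *\<^sub>R Z \<in> L" "t' *\<^sub>R Z \<in> L" using Z L by (simp_all add: subspace_scale)
  have qX: "(qn L' X)\<^sup>2 = t\<^sup>2 * (qn L' Z)\<^sup>2 + (norm u)\<^sup>2"
    using qn_sub[OF L' L sub tZ(1), of u] uo X qn_scale[OF L', of t Z] by (simp add: power_mult_distrib)
  have qP: "(qn L' P)\<^sup>2 = t'\<^sup>2 * (qn L' Z)\<^sup>2 + (norm u')\<^sup>2"
    using qn_sub[OF L' L sub tZ(2), of u'] u'o P qn_scale[OF L', of t' Z] by (simp add: power_mult_distrib)
  have nX2: "t\<^sup>2 * r\<^sup>2 + (norm u)\<^sup>2 = r\<^sup>2"
    using pyth[of "t *\<^sub>R Z" u] uo[OF tZ(1)] X nX nZ by (simp add: power_mult_distrib)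
  have nP2: "t'\<^sup>2 * r\<^sup>2 + (norm u')\<^sup>2 = r\<^sup>2"
    using pyth[of "t' *\<^sub>R Z" u'] u'o[OF tZ(2)] P nP nZ by (simp add: power_mult_distrib)
  have Qle: "(qn L' Z)\<^sup>2 \<le> r\<^sup>2" using qn_le_norm[OF L', of Z] nZ qn_nonneg[of L' Z] by (simp add: power_mono)
  have ule: "(norm u)\<^sup>2 \<le> (norm u')\<^sup>2" using le by (simp add: power_mono)
  have A: "(qn L' X)\<^sup>2 \<le> (qn L' P)\<^sup>2" "(qn L' P)\<^sup>2 \<le> (qn L' X)\<^sup>2 + (norm u')\<^sup>2"
    using mono_arith[of "r\<^sup>2" "(qn L' Z)\<^sup>2" "(norm u)\<^sup>2" "(norm u')\<^sup>2" "t\<^sup>2" "t'\<^sup>2", OF _ _ Qle _ ule nX2 nP2 qX qP]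
      r by auto
  show "(qn L' P)\<^sup>2 \<le> (qn L' X)\<^sup>2 + (norm u')\<^sup>2" using A(2) .
  show "qn L' X \<le> qn L' P" using A(1) qn_nonneg[of L' P] by (rule power2_le_imp_le)
qed



lemma tau_pos: "0 < tau" and tau_le: "tau \<le> 1/13"
proof -
  have s1: "sqrt (2/3) < 1" by (simp add: real_sqrt_less_iff)
  have s2: "0.815 \<le> sqrt (2/3::real)" by (rule real_le_rsqrt) (simp add: power2_eq_square)
  have "0 < 2 - 2 * sqrt (2/3::real)" using s1 by simp
  then show "0 < tau" by (simp add: tau_def)
  have "2 - 2 * sqrt (2/3::real) \<le> (8/13)\<^sup>2" using s2 by (simp add: power2_eq_square)
  then have "sqrt (2 - 2 * sqrt (2/3::real)) \<le> 8/13" using real_sqrt_le_mono by fastforce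
  then show "tau \<le> 1/13" by (simp add: tau_def)
qed

locale setting =
  fixes c :: "'a::euclidean_space" and r :: real and VV :: "'a set set" and n :: nat
    and eps :: "nat \<Rightarrow> real"
  assumes dimA: "DIM('a) = n + 1" and rpos: "r > 0"
    and VVp: "\<forall>V\<in>VV. affine V \<and> aff_dim V = int n \<and> c \<in> V"
    and good: "good_eps c r VV n eps"
begin

definition "LL A = Lalpha c A"
definition "lv A = dim (LL A)"
definition "dd A y = qn (LL A) (y - c)"

lemma LL_alt: "LL A = (\<lambda>x. x - c) ` Valpha A" by (simp add: LL_def Lalpha_def)

lemma mem_LL: "x - c \<in> LL A \<longleftrightarrow> x \<in> Valpha A"
  unfolding LL_alt by force

lemma mem_LL': "v \<in> LL A \<longleftrightarrow> c + v \<in> Valpha A"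
  using mem_LL[of "c + v" A] by simp

lemma c_in: "A \<subseteq> VV \<Longrightarrow> c \<in> Valpha A"
  using VVp by (auto simp: Valpha_def)

lemma LL_subspace: "A \<subseteq> VV \<Longrightarrow> subspace (LL A)"
proof -
  assume A: "A \<subseteq> VV"
  have "affine (Valpha A)" unfolding Valpha_def using VVp A by (intro affine_Inter) auto
  then have "affine ((+) (- c) ` Valpha A)" using affine_translation by blast
  moreover have "(+) (- c) ` Valpha A = LL A" unfolding LL_alt by (rule image_cong) auto
  moreover have "0 \<in> LL A" using c_in[OF A] mem_LL[of c A] by simp
  ultimately show ?thesis by (simp add: subspace_affine)
qed

lemma LL_Un: "LL (A \<union> B) = LL A \<inter> LL B"
  by (auto simp: LL_alt Valpha_def)

lemma LL_empty: "LL {} = UNIV"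
proof -
  have "v \<in> LL {}" for v using mem_LL'[of v "{}"] by (simp add: Valpha_def)
  then show ?thesis by auto
qed

lemma gdim_lv: "A \<subseteq> VV \<Longrightarrow> gdim A = int (lv A) - 1"
proof -
  assume A: "A \<subseteq> VV"
  have "aff_dim (Valpha A) = aff_dim ((\<lambda>x. x - c) ` Valpha A)"
    by (rule aff_dim_translation_eq_subtract[symmetric])
  also have "\<dots> = int (lv A)" unfolding lv_def LL_alt[symmetric] by (rule aff_dim_subspace[OF LL_subspace[OF A]])
  finally show ?thesis by (simp add: gdim_def)
qed

lemma W_eq: "Walpha c A = {u. \<forall>a\<in>LL A. inner a u = 0}" by (simp add: Walpha_def LL_def)

lemma sph: "p \<in> sphere c r \<longleftrightarrow> norm (p - c) = r" by (simp add: dist_norm norm_minus_commute)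

lemma Salpha_iff: "p \<in> Salpha c r A \<longleftrightarrow> p \<in> sphere c r \<and> p - c \<in> LL A"
  by (simp add: Salpha_def mem_LL)

lemma tube_iff: "A \<subseteq> VV \<Longrightarrow> p \<in> tube c r A e \<longleftrightarrow> p \<in> sphere c r \<and> dd A p < e"
proof -
  assume A: "A \<subseteq> VV"
  note S = LL_subspace[OF A]
  show ?thesis
  proof
    assume "p \<in> tube c r A e"
    then obtain a u where p: "p \<in> sphere c r" "p - c = a + u" "a \<in> LL A" "u \<in> Walpha c A" "norm u < e"
      by (auto simp: tube_def LL_def)
    have "pr (LL A) (p - c) = a" using p by (intro pr_unique[OF S]) (auto simp: W_eq)
    then show "p \<in> sphere c r \<and> dd A p < e" using p by (simp add: dd_def qn_def)
  next
    assume h: "p \<in> sphere c r \<and> dd A p < e"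
    let ?a = "pr (LL A) (p - c)"
    have "?a \<in> Lalpha c A" using pr(1)[OF S] by (simp add: LL_def)
    moreover have "p - c - ?a \<in> Walpha c A" using pr(2)[OF S] by (simp add: W_eq)
    ultimately show "p \<in> tube c r A e" using h unfolding tube_def dd_def qn_def
      by (intro CollectI conjI exI[of _ ?a] exI[of _ "p - c - ?a"]) auto
  qed
qed

lemma bigT_iff: "y \<in> bigT c r VV eps j \<longleftrightarrow> (\<exists>B. B \<subseteq> VV \<and> lv B = Suc j \<and> y \<in> sphere c r \<and> dd B y < eps j)"
proof -
  have "gdim B = int j \<longleftrightarrow> lv B = Suc j" if "B \<subseteq> VV" for B using gdim_lv[OF that] by auto
  then show ?thesis unfolding bigT_def using tube_iff by blast
qed

lemma Omega_iff: "y \<in> Omega c r VV eps k \<longleftrightarrow>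
   (\<exists>A. A \<subseteq> VV \<and> lv A = Suc k \<and> y \<in> sphere c r \<and> y - c \<in> LL A) \<and> (\<forall>j<k. y \<notin> bigT c r VV eps j)"
proof -
  have "gdim B = int k \<longleftrightarrow> lv B = Suc k" if "B \<subseteq> VV" for B using gdim_lv[OF that] by auto
  then show ?thesis unfolding Omega_def using Salpha_iff by blast
qed

lemma epos: "k < n \<Longrightarrow> eps k > 0" using good by (simp add: good_eps_def)
lemma e0: "eps 0 \<le> tau * r" using good by (simp add: good_eps_def)
lemma estep: "0 < k \<Longrightarrow> k < n \<Longrightarrow> eps k \<le> tau * eps (k - 1)"
proof -
  assume k: "0 < k" "k < n"
  then have "eps k / eps (k - 1) \<le> tau" using good by (simp add: good_eps_def)
  moreover have "eps (k - 1) > 0" using epos k by simp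
  ultimately show ?thesis by (simp add: divide_le_eq mult.commute)
qed

lemma eps_mono: "j \<le> k \<Longrightarrow> k < n \<Longrightarrow> eps k \<le> eps j"
proof (induction k)
  case 0 then show ?case by simp
next
  case (Suc k)
  show ?case
  proof (cases "j = Suc k")
    case True then show ?thesis by simp
  next
    case False
    then have "j \<le> k" using Suc by simp
    have "eps (Suc k) \<le> tau * eps k" using estep[of "Suc k"] Suc by simp
    also have "\<dots> \<le> eps k" using tau_le epos[of k] Suc by (simp add: mult_le_cancel_right1)
    also have "\<dots> \<le> eps j" using Suc \<open>j \<le> k\<close> by simp
    finally show ?thesis .
  qed
qed

lemma eps_lt: "j < k \<Longrightarrow> k < n \<Longrightarrow> eps k \<le> tau * eps j"
proof -
  assume jk: "j < k" "k < n"
  have "eps k \<le> tau * eps (k - 1)" using estep jk by simp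
  also have "\<dots> \<le> tau * eps j" using eps_mono[of j "k - 1"] jk tau_pos by (simp add: mult_left_mono)
  finally show ?thesis .
qed

lemma eps_r: "k < n \<Longrightarrow> eps k \<le> tau * r"
  using eps_mono[of 0 k] e0 by simp

lemma eps_r13: "k < n \<Longrightarrow> eps k \<le> r / 13"
proof -
  assume "k < n"
  then have "eps k \<le> tau * r" by (rule eps_r)
  also have "\<dots> \<le> r / 13" using tau_le rpos by (simp add: mult_right_mono)
  finally show ?thesis .
qed

lemma eps_lt13: "j < k \<Longrightarrow> k < n \<Longrightarrow> eps k \<le> eps j / 13"
proof -
  assume jk: "j < k" "k < n"
  have "eps k \<le> tau * eps j" using eps_lt jk .
  also have "\<dots> \<le> eps j / 13" using tau_le epos[of j] jk by (simp add: mult_right_mono)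
  finally show ?thesis .
qed

end



lemma arith_sep:
  fixes d e r :: real
  assumes "0 \<le> d" "d < 6 * e" "d \<le> 6/13 * r" "r > 0"
  shows "d\<^sup>2 + d^4 / r\<^sup>2 < (8 * e)\<^sup>2"
proof -
  have "d / r \<le> 6/13" using assms by (simp add: divide_le_eq)
  moreover have "0 \<le> d / r" using assms by simp
  ultimately have "(d / r)\<^sup>2 \<le> (6/13)\<^sup>2" using power_mono by blast
  then have "d\<^sup>2 * (d / r)\<^sup>2 \<le> d\<^sup>2 * (6/13)\<^sup>2" by (simp add: mult_left_mono)
  moreover have "d^4 / r\<^sup>2 = (d\<^sup>2)\<^sup>2 / r\<^sup>2" by (simp flip: power_mult)
  moreover have "(d\<^sup>2)\<^sup>2 / r\<^sup>2 = d\<^sup>2 * (d / r)\<^sup>2" by (simp add: power_divide power2_eq_square)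
  moreover have "(6/13::real)\<^sup>2 = 36/169" by (simp add: power2_eq_square)
  ultimately have a: "d^4 / r\<^sup>2 \<le> d\<^sup>2 * (36/169)" by simp
  have b: "d\<^sup>2 < (6 * e)\<^sup>2" using power_strict_mono[of d "6*e" 2] assms by simp
  have "d\<^sup>2 + d^4 / r\<^sup>2 \<le> d\<^sup>2 + d\<^sup>2 * (36/169)" using a by (rule add_left_mono)
  also have "\<dots> < (6 * e)\<^sup>2 * (205/169)" using b by simp
  also have "\<dots> \<le> (8 * e)\<^sup>2" by (simp add: power2_eq_square)
  finally show ?thesis .
qed

context setting
begin

lemma lv_mono: "A \<subseteq> VV \<Longrightarrow> B \<subseteq> VV \<Longrightarrow> LL A \<subseteq> LL B \<Longrightarrow> lv A \<le> lv B"
  unfolding lv_def by (rule dim_subset)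

lemma lv_psub:
  assumes "A \<subseteq> VV" "B \<subseteq> VV" "LL A \<subset> LL B" shows "lv A < lv B"
proof -
  have e1: "span (LL A) = LL A" using LL_subspace assms(1) by simp
  have e2: "span (LL B) = LL B" using LL_subspace assms(2) by simp
  have "span (LL A) \<subset> span (LL B)" unfolding e1 e2 using assms(3) .
  then show ?thesis unfolding lv_def by (rule dim_psubset)
qed

lemma LL_eq: "A \<subseteq> VV \<Longrightarrow> B \<subseteq> VV \<Longrightarrow> LL A \<subseteq> LL B \<Longrightarrow> lv B \<le> lv A \<Longrightarrow> LL A = LL B"
  unfolding lv_def by (rule subspace_dim_equal) (auto intro: LL_subspace)

lemma lv_le: "lv A \<le> n + 1"
  unfolding lv_def using dim_subset_UNIV[of "LL A"] dimA by simp

lemma dd_in: "A \<subseteq> VV \<Longrightarrow> y - c \<in> LL A \<Longrightarrow> dd A y = 0"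
  unfolding dd_def by (rule qn_in[OF LL_subspace])

lemma dd_lip: "A \<subseteq> VV \<Longrightarrow> dd A x \<le> dd A y + norm (x - y)"
  unfolding dd_def using qn_lip[OF LL_subspace, of A "x - c" "y - c"] by simp

lemma dd_nonneg: "0 \<le> dd A y" unfolding dd_def by (rule qn_nonneg)

lemma lv_pos: "1 \<le> lv A \<longleftrightarrow> (\<exists>x\<in>LL A. x \<noteq> 0)"
proof -
  have "1 \<le> lv A \<longleftrightarrow> lv A \<noteq> 0" by auto
  also have "\<dots> \<longleftrightarrow> \<not> LL A \<subseteq> {0}" unfolding lv_def by simp
  also have "\<dots> \<longleftrightarrow> (\<exists>x\<in>LL A. x \<noteq> 0)" by auto
  finally show ?thesis .
qed

lemma sep:
  assumes w: "w \<in> Omega c r VV eps i" and i: "i < n" and A: "A \<subseteq> VV" "A \<noteq> {}"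
    and wn: "w - c \<notin> LL A"
  shows "6 * eps i \<le> dd A w"
proof (rule ccontr)
  assume "\<not> ?thesis"
  then have d: "dd A w < 6 * eps i" by simp
  from wn obtain V where V: "V \<in> A" "w \<notin> V" using mem_LL by (auto simp: Valpha_def)
  have G: "\<forall>k<n. \<forall>\<omega>\<in>Omega c r VV eps k. \<forall>A. A \<subseteq> VV \<and> (\<exists>V\<in>VV. Valpha A \<subseteq> V \<and> V \<notin> Vx VV \<omega>) \<longrightarrow>
         ball \<omega> (8 * eps k) \<inter> tube c r A (eps k) = {}" using good by (simp add: good_eps_def)
  have "\<exists>V\<in>VV. Valpha A \<subseteq> V \<and> V \<notin> Vx VV w" using V A by (auto simp: Valpha_def Vx_def)
  then have cond: "ball w (8 * eps i) \<inter> tube c r A (eps i) = {}" using G i w A by blast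
  have "w \<in> sphere c r" using w Omega_iff by blast
  then have ws: "norm (w - c) = r" by (simp only: sph)
  note S = LL_subspace[OF A(1)]
  have dr: "dd A w \<le> 6/13 * r" using d eps_r13[OF i] by simp
  have qr: "qn (LL A) (w - c) < r" using dr rpos unfolding dd_def by simp
  define \<Omega> where "\<Omega> = (r / norm (pr (LL A) (w - c))) *\<^sub>R pr (LL A) (w - c)"
  have R: "\<Omega> \<in> LL A" "norm \<Omega> = r" "(norm (w - c - \<Omega>))\<^sup>2 \<le> (dd A w)\<^sup>2 + (dd A w)^4 / r\<^sup>2"
    using radial[OF S ws qr] unfolding \<Omega>_def dd_def by auto
  define q where "q = c + \<Omega>"
  have "q \<in> tube c r A (eps i)"
    using R dd_in[OF A(1), of q] epos[OF i] by (simp add: tube_iff[OF A(1)] q_def dist_norm)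
  moreover have "dist w q < 8 * eps i"
  proof -
    have "(norm (w - q))\<^sup>2 < (8 * eps i)\<^sup>2"
      using R(3) arith_sep[OF dd_nonneg d dr rpos] by (simp add: q_def algebra_simps)
    then have "norm (w - q) < 8 * eps i" by (rule power_less_imp_less_base) (use epos[OF i] in simp)
    then show ?thesis by (simp add: dist_norm)
  qed
  ultimately show False using cond by auto
qed

definition Nst :: "nat \<Rightarrow> bool" where
  "Nst i \<longleftrightarrow> (\<forall>y A' A. y \<in> sphere c r \<longrightarrow> A' \<subseteq> VV \<longrightarrow> A \<subseteq> VV \<longrightarrow> lv A' = Suc i \<longrightarrow>
      dd A' y < 5/4 * eps i \<longrightarrow> dd A y < 2 * eps i \<longrightarrow> \<not> LL A' \<subseteq> LL A \<longrightarrow>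
      (1 \<le> lv (A' \<union> A) \<and> dd (A' \<union> A) y < 3/4 * eps (lv (A' \<union> A) - 1)))"

definition NEst :: "nat \<Rightarrow> bool" where
  "NEst k \<longleftrightarrow> (\<forall>B. B \<subseteq> VV \<longrightarrow> lv B = Suc k \<longrightarrow> (\<exists>m. m \<in> sphere c r \<and> m - c \<in> LL B \<and>
      (\<forall>B''. B'' \<subseteq> VV \<longrightarrow> LL B'' \<subset> LL B \<longrightarrow> 1 \<le> lv B'' \<longrightarrow> eps (lv B'' - 1) \<le> dd B'' m)))"

lemma NstD:
  assumes "Nst i" "y \<in> sphere c r" "A' \<subseteq> VV" "A \<subseteq> VV" "lv A' = Suc i"
      "dd A' y < 5/4 * eps i" "dd A y < 2 * eps i" "\<not> LL A' \<subseteq> LL A"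
  shows "1 \<le> lv (A' \<union> A)" "dd (A' \<union> A) y < 3/4 * eps (lv (A' \<union> A) - 1)"
  using assms unfolding Nst_def by blast+

lemma star:
  assumes IH: "\<forall>j<i. Nst j" and i: "i < n" and A': "A' \<subseteq> VV" "lv A' = Suc i"
    and w: "w \<in> sphere c r" "w - c \<in> LL A'"
    and j: "j < i" and B: "B \<subseteq> VV" "lv B = Suc j" "dd B w < eps j"
  shows "\<exists>B''. B'' \<subseteq> VV \<and> LL B'' \<subset> LL A' \<and> 1 \<le> lv B'' \<and> dd B'' w < eps (lv B'' - 1)"
proof (cases "LL B \<subseteq> LL A'")
  case True
  have "LL B \<noteq> LL A'"
  proof
    assume "LL B = LL A'"
    then have "lv B = lv A'" by (simp add: lv_def)
    then show False using B A' j by simp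
  qed
  then have "LL B \<subset> LL A'" using True by auto
  then show ?thesis using B by (intro exI[of _ B]) auto
next
  case False
  have ej: "eps j > 0" using epos j i by simp
  have h1: "dd B w < 5/4 * eps j" using B ej by simp
  have h2: "dd A' w < 2 * eps j" using dd_in[OF A'(1) w(2)] ej by simp
  note N = NstD[OF IH[rule_format, OF j] w(1) B(1) A'(1) B(2) h1 h2 False]
  have sub: "LL (B \<union> A') \<subseteq> LL A'" by (simp add: LL_Un)
  have BA: "B \<union> A' \<subseteq> VV" using B A' by simp
  have "LL (B \<union> A') \<noteq> LL A'"
  proof
    assume "LL (B \<union> A') = LL A'"
    then have "LL A' \<subseteq> LL B" by (auto simp: LL_Un)
    then have "lv A' \<le> lv B" using lv_mono A' B by blast
    then show False using A' B j by simp
  qed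
  then have ps: "LL (B \<union> A') \<subset> LL A'" using sub by auto
  have "lv (B \<union> A') \<le> lv A'" using lv_mono[OF BA A'(1) sub] .
  then have "lv (B \<union> A') - 1 < n" using A' i by simp
  then have "eps (lv (B \<union> A') - 1) > 0" by (rule epos)
  then have "dd (B \<union> A') w < eps (lv (B \<union> A') - 1)" using N(2) by simp
  then show ?thesis using BA ps N(1) by blast
qed

lemma Omega_intro:
  assumes IH: "\<forall>j<i. Nst j" and i: "i < n" and A': "A' \<subseteq> VV" "lv A' = Suc i"
    and w: "w \<in> sphere c r" "w - c \<in> LL A'"
    and deep: "\<And>B''. B'' \<subseteq> VV \<Longrightarrow> LL B'' \<subset> LL A' \<Longrightarrow> 1 \<le> lv B'' \<Longrightarrow> eps (lv B'' - 1) \<le> dd B'' w"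
  shows "w \<in> Omega c r VV eps i"
proof -
  have "w \<notin> bigT c r VV eps j" if j: "j < i" for j
  proof
    assume "w \<in> bigT c r VV eps j"
    then obtain B where B: "B \<subseteq> VV" "lv B = Suc j" "dd B w < eps j" by (auto simp: bigT_iff)
    from star[OF IH i A' w j B] obtain B'' where "B'' \<subseteq> VV" "LL B'' \<subset> LL A'" "1 \<le> lv B''"
      "dd B'' w < eps (lv B'' - 1)" by blast
    then show False using deep by force
  qed
  then show ?thesis using A' w by (auto simp: Omega_iff)
qed

end



lemma deep_arith:
  fixes r t e Q D :: real
  assumes r: "r > 0" and t: "0 \<le> t" "t \<le> r" and e: "0 \<le> e" "e \<le> r" "e \<le> Q"
    and D: "0 \<le> D" "D\<^sup>2 = (r\<^sup>2 - t\<^sup>2) / r\<^sup>2 * Q\<^sup>2 + t\<^sup>2"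
  shows "e \<le> D"
proof -
  have tr: "t\<^sup>2 \<le> r\<^sup>2" using t by (simp add: power_mono)
  have er: "e\<^sup>2 \<le> r\<^sup>2" using e by (simp add: power_mono)
  have eQ: "e\<^sup>2 \<le> Q\<^sup>2" using e by (simp add: power_mono)
  have k: "0 \<le> (r\<^sup>2 - t\<^sup>2) / r\<^sup>2" using tr r by simp
  have m1: "(r\<^sup>2 - t\<^sup>2) / r\<^sup>2 * e\<^sup>2 \<le> (r\<^sup>2 - t\<^sup>2) / r\<^sup>2 * Q\<^sup>2" using eQ k by (rule mult_left_mono)
  have m2: "(r\<^sup>2 - t\<^sup>2) / r\<^sup>2 * e\<^sup>2 + t\<^sup>2 = e\<^sup>2 + t\<^sup>2 * (1 - e\<^sup>2 / r\<^sup>2)"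
    using r by (simp add: field_simps)
  have m3: "0 \<le> t\<^sup>2 * (1 - e\<^sup>2 / r\<^sup>2)" using er r by simp
  have "e\<^sup>2 \<le> e\<^sup>2 + t\<^sup>2 * (1 - e\<^sup>2 / r\<^sup>2)" using m3 by simp
  also have "\<dots> = (r\<^sup>2 - t\<^sup>2) / r\<^sup>2 * e\<^sup>2 + t\<^sup>2" using m2 by simp
  also have "\<dots> \<le> (r\<^sup>2 - t\<^sup>2) / r\<^sup>2 * Q\<^sup>2 + t\<^sup>2" using m1 by simp
  also have "\<dots> = D\<^sup>2" using D(2) by simp
  finally have "e\<^sup>2 \<le> D\<^sup>2" .
  then show ?thesis using D(1) by (rule power2_le_imp_le)
qed

context setting
begin

lemma K1:
  assumes C: "C \<subseteq> VV" and B'': "B'' \<subseteq> VV" "LL B'' \<subseteq> LL C" and MC: "MC \<in> LL C"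
    and v: "\<And>l. l \<in> LL C \<Longrightarrow> inner l v = 0" "norm v = 1" and s: "0 \<le> s"
  shows "(qn (LL B'') (\<alpha> *\<^sub>R MC + s *\<^sub>R v))\<^sup>2 = \<alpha>\<^sup>2 * (qn (LL B'') MC)\<^sup>2 + s\<^sup>2"
proof -
  have "\<alpha> *\<^sub>R MC \<in> LL C" using MC LL_subspace[OF C] by (simp add: subspace_scale)
  moreover have "\<And>l. l \<in> LL C \<Longrightarrow> inner l (s *\<^sub>R v) = 0" using v by simp
  ultimately have "(qn (LL B'') (\<alpha> *\<^sub>R MC + s *\<^sub>R v))\<^sup>2 = (qn (LL B'') (\<alpha> *\<^sub>R MC))\<^sup>2 + (norm (s *\<^sub>R v))\<^sup>2"
    by (intro qn_sub[OF LL_subspace[OF B''(1)] LL_subspace[OF C] B''(2)])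
  then show ?thesis using qn_scale[OF LL_subspace[OF B''(1)], of \<alpha> MC] v s by (simp add: power_mult_distrib)
qed

lemma K2:
  assumes B'': "B'' \<subseteq> VV" and sub: "M \<subseteq> LL B''" and m: "m \<in> M"
  shows "qn (LL B'') (m + t *\<^sub>R v) = \<bar>t\<bar> * qn (LL B'') v"
  using qn_sup[OF LL_subspace[OF B''] sub m] qn_scale[OF LL_subspace[OF B'']] by simp

lemma NE_step:
  assumes IH: "\<forall>j<k. Nst j \<and> NEst j" and k: "k < n"
  shows "NEst k"
  unfolding NEst_def
proof (intro allI impI)
  fix B assume B: "B \<subseteq> VV" "lv B = Suc k"
  note SB = LL_subspace[OF B(1)]
  define CC where "CC = {C. C \<subseteq> VV \<and> LL C \<subset> LL B \<and> 1 \<le> lv C}"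
  show "\<exists>m. m \<in> sphere c r \<and> m - c \<in> LL B \<and> (\<forall>B''. B'' \<subseteq> VV \<longrightarrow> LL B'' \<subset> LL B \<longrightarrow> 1 \<le> lv B'' \<longrightarrow> eps (lv B'' - 1) \<le> dd B'' m)"
  proof (cases "CC = {}")
    case True
    obtain x where x: "x \<in> LL B" "x \<noteq> 0" using lv_pos[of B] B by auto
    define m where "m = c + (r / norm x) *\<^sub>R x"
    have "m \<in> sphere c r" unfolding sph using x rpos by (simp add: m_def)
    moreover have "m - c \<in> LL B" using x SB by (simp add: m_def subspace_scale)
    moreover have "\<forall>B''. B'' \<subseteq> VV \<longrightarrow> LL B'' \<subset> LL B \<longrightarrow> 1 \<le> lv B'' \<longrightarrow> eps (lv B'' - 1) \<le> dd B'' m"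
      using True unfolding CC_def by blast
    ultimately show ?thesis by blast
  next
    case False
    have "lv ` CC \<subseteq> {..n+1}" using lv_le by auto
    then have fin: "finite (lv ` CC)" using finite_subset by blast
    define g where "g = Max (lv ` CC)"
    have "g \<in> lv ` CC" using fin False unfolding g_def using Max_in by blast
    then obtain C where C: "C \<in> CC" "lv C = g" by auto
    have gmax: "\<And>C'. C' \<in> CC \<Longrightarrow> lv C' \<le> g" using fin unfolding g_def by auto
    have C1: "C \<subseteq> VV" "LL C \<subset> LL B" "1 \<le> lv C" using C(1) unfolding CC_def by auto
    note SC = LL_subspace[OF C1(1)]
    have "lv C < lv B" using lv_psub[OF C1(1) B(1) C1(2)] .
    then have gk: "lv C - 1 < k" using B C1 by simp
    have lvC: "lv C = Suc (lv C - 1)" using C1 by simp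
    have "NEst (lv C - 1)" using IH gk by blast
    note ex = this[unfolded NEst_def, rule_format, OF C1(1) lvC]
    then obtain mC where mC: "mC \<in> sphere c r" "mC - c \<in> LL C"
      and deepC: "\<And>B''. B'' \<subseteq> VV \<Longrightarrow> LL B'' \<subset> LL C \<Longrightarrow> 1 \<le> lv B'' \<Longrightarrow> eps (lv B'' - 1) \<le> dd B'' mC"
      by blast
    have e1: "span (LL C) = LL C" using SC by simp
    have e2: "span (LL B) = LL B" using SB by simp
    have psp: "span (LL C) \<subset> span (LL B)" unfolding e1 e2 using C1(2) .
    obtain x where x: "x \<noteq> 0" "x \<in> span (LL B)" "\<And>y. y \<in> span (LL C) \<Longrightarrow> orthogonal x y"
      using orthogonal_to_subspace_exists_gen[OF psp] by blast
    define v where "v = (1 / norm x) *\<^sub>R x"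
    have v: "norm v = 1" "v \<in> LL B" "\<And>l. l \<in> LL C \<Longrightarrow> inner l v = 0"
      using x SB SC unfolding e1 e2 by (auto simp: v_def subspace_scale span_base orthogonal_def inner_commute)
    define s where "s = eps (lv C - 1)"
    have s: "0 < s" "s \<le> r / 13" using epos eps_r13 gk k unfolding s_def by auto
    have sr: "s \<le> r" using s rpos by simp
    define \<alpha> where "\<alpha> = sqrt (r\<^sup>2 - s\<^sup>2) / r"
    define MC where "MC = mC - c"
    have nMC: "norm MC = r" using mC by (simp add: MC_def dist_norm norm_minus_commute)
    define Mv where "Mv = \<alpha> *\<^sub>R MC + s *\<^sub>R v"
    define m where "m = c + Mv"
    have mc: "m - c = Mv" by (simp add: m_def)
    have a2: "\<alpha>\<^sup>2 = (r\<^sup>2 - s\<^sup>2) / r\<^sup>2"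
    proof -
      have "s\<^sup>2 \<le> r\<^sup>2" using sr s by (simp add: power_mono)
      then show ?thesis by (simp add: \<alpha>_def power_divide)
    qed
    have "(norm Mv)\<^sup>2 = (norm (\<alpha> *\<^sub>R MC))\<^sup>2 + (norm (s *\<^sub>R v))\<^sup>2"
      unfolding Mv_def using v(3) mC(2) by (intro pyth) (simp add: MC_def)
    also have "\<dots> = \<alpha>\<^sup>2 * r\<^sup>2 + s\<^sup>2" using nMC v s by (simp add: power_mult_distrib)
    also have "\<dots> = r\<^sup>2" using a2 rpos by (simp add: field_simps)
    finally have "norm Mv = r" using rpos by (simp add: power2_eq_iff_nonneg)
    then have msph: "m \<in> sphere c r" unfolding sph mc .
    have MvB: "Mv \<in> LL B" unfolding Mv_def using mC(2) C1(2) v SB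
      by (intro subspace_add[OF SB] subspace_scale[OF SB]) (auto simp: MC_def)
    have MCC: "MC \<in> LL C" using mC by (simp add: MC_def)
    have ddCm: "dd C m = s"
    proof -
      have "\<alpha> *\<^sub>R MC \<in> LL C" using MCC SC by (simp add: subspace_scale)
      then have "qn (LL C) Mv = \<bar>s\<bar> * qn (LL C) v" unfolding Mv_def by (intro K2[OF C1(1)]) auto
      also have "qn (LL C) v = 1" using qn_orth[OF SC, of v] v by simp
      finally show ?thesis using s by (simp add: dd_def mc)
    qed
    have deep: "eps (lv B'' - 1) \<le> dd B'' m" if B'': "B'' \<subseteq> VV" "LL B'' \<subset> LL B" "1 \<le> lv B''" for B''
    proof -
      define e where "e = eps (lv B'' - 1)"
      have "B'' \<in> CC" using B'' unfolding CC_def by auto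
      then have lvB'': "lv B'' \<le> lv C" using gmax C by auto
      then have ik: "lv B'' - 1 < n" using gk k by simp
      have epos': "0 < e" using epos[OF ik] by (simp add: e_def)
      have er: "e \<le> r" using eps_r13[OF ik] rpos by (simp add: e_def)
      have se: "s \<le> e" unfolding s_def e_def using lvB'' gk k by (intro eps_mono) auto
      show ?thesis
      proof (cases "LL B'' \<subseteq> LL C")
        case True
        show ?thesis
        proof (cases "LL B'' = LL C")
          case True
          then have "dd B'' m = dd C m" "lv B'' = lv C" by (simp_all add: dd_def lv_def)
          then show ?thesis using ddCm by (simp add: s_def)
        next
          case False
          then have ps: "LL B'' \<subset> LL C" using \<open>LL B'' \<subseteq> LL C\<close> by auto
          have d1: "e \<le> qn (LL B'') MC" using deepC[OF B''(1) ps B''(3)] by (simp add: e_def dd_def MC_def)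
          have d2: "(qn (LL B'') Mv)\<^sup>2 = \<alpha>\<^sup>2 * (qn (LL B'') MC)\<^sup>2 + s\<^sup>2"
            unfolding Mv_def using K1[OF C1(1) B''(1) \<open>LL B'' \<subseteq> LL C\<close> MCC v(3) v(1)] s by simp
          have "e \<le> qn (LL B'') Mv"
            using deep_arith[OF rpos _ sr _ er d1 qn_nonneg] d2 a2 s epos' by simp
          then show ?thesis by (simp add: dd_def mc e_def)
        qed
      next
        case nBC: False
        show ?thesis
        proof (cases "LL C \<subseteq> LL B''")
          case True
          then have "LL C \<subset> LL B''" using nBC by auto
          then have "lv C < lv B''" using lv_psub C1(1) B''(1) by blast
          then show ?thesis using lvB'' by simp
        next
          case nCB: False
          show ?thesis
          proof (rule ccontr)
            assume "\<not> ?thesis"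
            then have h1: "dd B'' m < e" by (simp add: e_def)
            have ib: "lv B'' - 1 < k" using lvB'' gk by simp
            have N: "Nst (lv B'' - 1)" using IH ib by blast
            have lvb: "lv B'' = Suc (lv B'' - 1)" using B'' by simp
            have h1': "dd B'' m < 5/4 * eps (lv B'' - 1)" using h1 epos' by (simp add: e_def)
            have h2: "dd C m < 2 * eps (lv B'' - 1)" using ddCm se epos' by (simp add: e_def)
            note R = NstD[OF N msph B''(1) C1(1) lvb h1' h2 nBC]
            have BC: "B'' \<union> C \<subseteq> VV" using B'' C1 by simp
            have psC: "LL (B'' \<union> C) \<subset> LL C" using nCB by (auto simp: LL_Un)
            then have "lv (B'' \<union> C) < lv C" using lv_psub BC C1(1) by blast
            then have i5: "lv (B'' \<union> C) - 1 < n" using gk k by simp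
            define e5 where "e5 = eps (lv (B'' \<union> C) - 1)"
            have e5p: "0 < e5" using epos[OF i5] by (simp add: e5_def)
            have e5r: "e5 \<le> r" using eps_r13[OF i5] rpos by (simp add: e5_def)
            have d1: "e5 \<le> qn (LL (B'' \<union> C)) MC"
              using deepC[OF BC psC R(1)] by (simp add: e5_def dd_def MC_def)
            have d2: "(qn (LL (B'' \<union> C)) Mv)\<^sup>2 = \<alpha>\<^sup>2 * (qn (LL (B'' \<union> C)) MC)\<^sup>2 + s\<^sup>2"
              unfolding Mv_def using K1[OF C1(1) BC _ MCC v(3) v(1)] psC s by auto
            have "e5 \<le> qn (LL (B'' \<union> C)) Mv"
              using deep_arith[OF rpos _ sr _ e5r d1 qn_nonneg] d2 a2 s e5p by simp
            then show False using R(2) e5p by (simp add: dd_def mc e5_def)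
          qed
        qed
      qed
    qed
    show ?thesis using msph MvB deep by (intro exI[of _ m]) (auto simp: mc)
  qed
qed

end



lemma arith_k:
  fixes q r X :: real
  assumes q: "0 \<le> q" "q \<le> r / 10" and r: "r > 0" and X: "0 \<le> X" "X\<^sup>2 \<le> q\<^sup>2 + q^4 / r\<^sup>2"
  shows "X \<le> 21/20 * q"
proof -
  have "q / r \<le> 1/10" using q r by (simp add: divide_le_eq)
  moreover have "0 \<le> q / r" using q r by simp
  ultimately have "(q / r)\<^sup>2 \<le> (1/10)\<^sup>2" using power_mono by blast
  then have m: "q\<^sup>2 * (q / r)\<^sup>2 \<le> q\<^sup>2 * (1/10)\<^sup>2" by (simp add: mult_left_mono)
  have "q^4 / r\<^sup>2 = (q\<^sup>2)\<^sup>2 / r\<^sup>2" by (simp flip: power_mult)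
  also have "\<dots> = q\<^sup>2 * (q / r)\<^sup>2" by (simp add: power_divide power2_eq_square)
  also have "\<dots> \<le> q\<^sup>2 * (1/10)\<^sup>2" by (rule m)
  also have "\<dots> = q\<^sup>2 * (1/100)" by (simp add: power2_eq_square)
  finally have a: "q^4 / r\<^sup>2 \<le> q\<^sup>2 * (1/100)" .
  have "X\<^sup>2 \<le> q\<^sup>2 + q\<^sup>2 * (1/100)" using X(2) a by (rule order_trans[OF _ add_left_mono])
  also have "\<dots> \<le> (21/20 * q)\<^sup>2" by (simp add: power2_eq_square)
  finally have "X\<^sup>2 \<le> (21/20 * q)\<^sup>2" .
  then show ?thesis using power2_le_imp_le[of X "21/20 * q"] q by simp
qed

context setting
begin

lemma N_step:
  assumes IH: "\<forall>j<i. Nst j \<and> NEst j" and i: "i < n"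
  shows "Nst i"
  unfolding Nst_def
proof (intro allI impI)
  fix y A' A
  assume y: "y \<in> sphere c r" and A'V: "A' \<subseteq> VV" and AV: "A \<subseteq> VV" and lvA': "lv A' = Suc i"
    and h1: "dd A' y < 5/4 * eps i" and h2: "dd A y < 2 * eps i" and nsub: "\<not> LL A' \<subseteq> LL A"
  have IHN: "\<forall>j<i. Nst j" using IH by blast
  define M where "M = LL (A' \<union> A)"
  have UV: "A' \<union> A \<subseteq> VV" using A'V AV by simp
  have M_eq: "M = LL A' \<inter> LL A" by (simp add: M_def LL_Un)
  note SA' = LL_subspace[OF A'V] and SA = LL_subspace[OF AV] and SM = LL_subspace[OF UV]
  have SM': "subspace M" using SM by (simp add: M_def)
  have ei: "0 < eps i" using epos[OF i] .
  have eir: "eps i \<le> r / 13" using eps_r13[OF i] .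
  have MA': "M \<subset> LL A'" using nsub M_eq by auto
  have MA: "M \<subseteq> LL A" using M_eq by auto
  have lvMA': "lv (A' \<union> A) < lv A'" using lv_psub[OF UV A'V] MA' by (simp add: M_def)
  have Ane: "A \<noteq> {}" using nsub LL_empty by auto
  define e3 where "e3 = eps (lv (A' \<union> A) - 1)"
  have e3i: "1 \<le> lv (A' \<union> A) \<Longrightarrow> eps i \<le> e3 / 13"
    unfolding e3_def using lvMA' lvA' i by (intro eps_lt13) auto
  have e3p: "1 \<le> lv (A' \<union> A) \<Longrightarrow> 0 < e3"
    unfolding e3_def using lvMA' lvA' i by (intro epos) auto
  show "1 \<le> lv (A' \<union> A) \<and> dd (A' \<union> A) y < 3/4 * eps (lv (A' \<union> A) - 1)"
  proof (cases "\<exists>B''. B'' \<subseteq> VV \<and> M \<subset> LL B'' \<and> LL B'' \<subset> LL A' \<and> dd B'' y < 5/4 * eps (lv B'' - 1)")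
    case True
    then obtain B'' where B'': "B'' \<subseteq> VV" "M \<subset> LL B''" "LL B'' \<subset> LL A'" "dd B'' y < 5/4 * eps (lv B'' - 1)"
      by blast
    have "lv B'' < lv A'" using lv_psub[OF B''(1) A'V B''(3)] .
    moreover have "lv (A' \<union> A) < lv B''" using lv_psub[OF UV B''(1)] B''(2) by (simp add: M_def)
    ultimately have bi: "lv B'' - 1 < i" and lvb: "lv B'' = Suc (lv B'' - 1)" using lvA' by auto
    have Nb: "Nst (lv B'' - 1)" using IH bi by blast
    have h2': "dd A y < 2 * eps (lv B'' - 1)"
    proof -
      have "eps i \<le> eps (lv B'' - 1)" using bi i by (intro eps_mono) auto
      then show ?thesis using h2 by simp
    qed
    have nsubB: "\<not> LL B'' \<subseteq> LL A" using B'' M_eq by auto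
    note R = NstD[OF Nb y B''(1) AV lvb B''(4) h2' nsubB]
    have eqL: "LL (B'' \<union> A) = M" using B'' M_eq by (auto simp: LL_Un)
    then have "lv (B'' \<union> A) = lv (A' \<union> A)" "dd (B'' \<union> A) y = dd (A' \<union> A) y"
      by (simp_all add: lv_def dd_def M_def)
    then show ?thesis using R by simp
  next
    case False
    have step2: "5/4 * eps (lv B'' - 1) \<le> dd B'' y"
      if "B'' \<subseteq> VV" "M \<subset> LL B''" "LL B'' \<subset> LL A'" for B''
    proof (rule ccontr)
      assume "\<not> 5/4 * eps (lv B'' - 1) \<le> dd B'' y"
      then have "dd B'' y < 5/4 * eps (lv B'' - 1)" by simp
      then show False using False that by blast
    qed
    define Y where "Y = y - c"
    have nY: "norm Y = r" using y by (simp add: Y_def dist_norm norm_minus_commute)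
    define q0 where "q0 = qn (LL A') Y"
    have q0: "q0 = dd A' y" by (simp add: q0_def dd_def Y_def)
    have q0r: "q0 \<le> r / 10" using h1 eir q0 rpos by simp
    have q0lt: "q0 < r" using q0r rpos by simp
    define \<Omega> where "\<Omega> = (r / norm (pr (LL A') Y)) *\<^sub>R pr (LL A') Y"
    have Rad: "\<Omega> \<in> LL A'" "norm \<Omega> = r" "(norm (Y - \<Omega>))\<^sup>2 \<le> q0\<^sup>2 + q0^4 / r\<^sup>2"
      using radial[OF SA' nY q0lt[unfolded q0_def]] unfolding \<Omega>_def q0_def by auto
    have dYO: "norm (Y - \<Omega>) \<le> 21/20 * q0"
      using arith_k[OF qn_nonneg q0r[unfolded q0_def] rpos norm_ge_zero Rad(3)[unfolded q0_def]] by (simp add: q0_def)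
    have dYO': "norm (Y - \<Omega>) < 21/16 * eps i" using dYO h1 q0 by simp
    define \<delta> where "\<delta> = qn M \<Omega>"
    have SC: "1 \<le> lv (A' \<union> A) \<and> \<delta> \<le> 3/5 * e3"
    proof (rule ccontr)
      assume H: "\<not> (1 \<le> lv (A' \<union> A) \<and> \<delta> \<le> 3/5 * e3)"
      have e3p': "lv (A' \<union> A) \<noteq> 0 \<Longrightarrow> 0 < e3" using e3p by simp
      have \<delta>r: "\<delta> \<le> r" using qn_le_norm[OF SM', of \<Omega>] Rad(2) by (simp add: \<delta>_def)
      have \<delta>0: "lv (A' \<union> A) = 0 \<Longrightarrow> \<delta> = r"
      proof -
        assume "lv (A' \<union> A) = 0"
        then have "M \<subseteq> {0}" by (simp add: lv_def M_def)
        then have "\<And>l. l \<in> M \<Longrightarrow> inner l \<Omega> = 0" by auto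
        then show "\<delta> = r" using qn_orth[OF SM'] Rad(2) by (simp add: \<delta>_def)
      qed
      have \<delta>big: "lv (A' \<union> A) \<noteq> 0 \<Longrightarrow> 3/5 * e3 < \<delta>" using H by auto
      have \<delta>p: "0 < \<delta>"
      proof (cases "lv (A' \<union> A) = 0")
        case True then show ?thesis using \<delta>0 rpos by simp
      next
        case False
        have "3/5 * e3 < \<delta>" "0 < e3" using \<delta>big[OF False] e3p'[OF False] by auto
        then show ?thesis by linarith
      qed
      define v where "v = (1 / \<delta>) *\<^sub>R (\<Omega> - pr M \<Omega>)"
      have \<Omega>split: "\<Omega> = pr M \<Omega> + \<delta> *\<^sub>R v" using \<delta>p by (simp add: v_def)
      have nv: "norm v = 1" using \<delta>p by (simp add: v_def \<delta>_def qn_def)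
      have vM: "\<And>l. l \<in> M \<Longrightarrow> inner l v = 0" using pr(2)[OF SM'] by (simp add: v_def)
      have prM: "pr M \<Omega> \<in> M" using pr(1)[OF SM'] .
      have vA': "v \<in> LL A'" unfolding v_def using Rad(1) prM MA' SA'
        by (auto intro!: subspace_scale subspace_diff)
      define t where "t = (if lv (A' \<union> A) = 0 then r else max \<delta> e3)"
      have t\<delta>: "\<delta> \<le> t" using \<delta>r unfolding t_def by auto
      have "lv (A' \<union> A) - 1 < n" using lvMA' lvA' i by simp
      then have "e3 \<le> r / 13" unfolding e3_def by (rule eps_r13)
      then have e3r: "e3 \<le> r" using rpos by simp
      have tr: "t \<le> r" using \<delta>r e3r unfolding t_def by auto
      have tp: "0 < t" using t\<delta> \<delta>p by simp
      have t53: "t \<le> 5/3 * \<delta>" using \<delta>0 \<delta>big \<delta>p unfolding t_def by auto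
      have te3: "lv (A' \<union> A) \<noteq> 0 \<Longrightarrow> e3 \<le> t" unfolding t_def by auto
      obtain mh where mh: "mh \<in> M" and mhn: "lv (A' \<union> A) \<noteq> 0 \<Longrightarrow> norm mh = 1"
        and mh0: "lv (A' \<union> A) = 0 \<Longrightarrow> mh = 0"
        and deepm: "\<And>B''. B'' \<subseteq> VV \<Longrightarrow> LL B'' \<subset> M \<Longrightarrow> 1 \<le> lv B'' \<Longrightarrow> eps (lv B'' - 1) \<le> r * qn (LL B'') mh"
      proof (cases "lv (A' \<union> A) = 0")
        case True
        have "LL B'' \<subset> M \<Longrightarrow> False" if "B'' \<subseteq> VV" for B''
        proof -
          assume "LL B'' \<subset> M"
          moreover have "M \<subseteq> {0}" using True by (simp add: lv_def M_def)
          moreover have "0 \<in> LL B''" using LL_subspace[OF that] by (simp add: subspace_0)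
          ultimately show False by auto
        qed
        show ?thesis
        proof (rule that[of 0])
          show "0 \<in> M" using SM' by (simp add: subspace_0)
          show "lv (A' \<union> A) \<noteq> 0 \<Longrightarrow> norm (0::'a) = 1" using True by simp
          show "lv (A' \<union> A) = 0 \<Longrightarrow> (0::'a) = 0" by simp
          show "eps (lv B'' - 1) \<le> r * qn (LL B'') 0" if "B'' \<subseteq> VV" "LL B'' \<subset> M" "1 \<le> lv B''" for B''
            using \<open>\<And>B''. B'' \<subseteq> VV \<Longrightarrow> LL B'' \<subset> M \<Longrightarrow> False\<close> that by blast
        qed
      next
        case False
        have ki: "lv (A' \<union> A) - 1 < i" using lvMA' lvA' False by simp
        have lvs: "lv (A' \<union> A) = Suc (lv (A' \<union> A) - 1)" using False by simp
        have "NEst (lv (A' \<union> A) - 1)" using IH ki by blast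
        note ex = this[unfolded NEst_def, rule_format, OF UV lvs]
        then obtain m0 where m0a: "m0 \<in> sphere c r" and m0b: "m0 - c \<in> LL (A' \<union> A)"
          and deep0': "\<forall>B''. B'' \<subseteq> VV \<longrightarrow> LL B'' \<subset> LL (A' \<union> A) \<longrightarrow> 1 \<le> lv B'' \<longrightarrow> eps (lv B'' - 1) \<le> dd B'' m0"
          by (elim exE conjE)
        have m0: "m0 \<in> sphere c r" "m0 - c \<in> M" using m0a m0b by (simp_all add: M_def)
        have deep0: "eps (lv B'' - 1) \<le> dd B'' m0" if "B'' \<subseteq> VV" "LL B'' \<subset> M" "1 \<le> lv B''" for B''
          using deep0' that unfolding M_def by blast
        have nm0: "norm (m0 - c) = r" using m0 by (simp add: dist_norm norm_minus_commute)
        define mh where "mh = (1 / r) *\<^sub>R (m0 - c)"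
        have "mh \<in> M" using m0 SM' by (simp add: mh_def subspace_scale)
        moreover have "norm mh = 1" using nm0 rpos by (simp add: mh_def)
        moreover have "eps (lv B'' - 1) \<le> r * qn (LL B'') mh"
          if "B'' \<subseteq> VV" "LL B'' \<subset> M" "1 \<le> lv B''" for B''
          using deep0[OF that] qn_scale[OF LL_subspace[OF that(1)], of "1/r" "m0 - c"] rpos
          by (simp add: mh_def dd_def)
        ultimately show ?thesis using False by (intro that[of mh]) auto
      qed
      define \<alpha> where "\<alpha> = sqrt (r\<^sup>2 - t\<^sup>2)"
      have a2: "\<alpha>\<^sup>2 = r\<^sup>2 - t\<^sup>2"
      proof -
        have "t\<^sup>2 \<le> r\<^sup>2" using tr tp by (simp add: power_mono)
        then show ?thesis by (simp add: \<alpha>_def)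
      qed
      have amh: "\<alpha>\<^sup>2 * (norm mh)\<^sup>2 = r\<^sup>2 - t\<^sup>2"
      proof (cases "lv (A' \<union> A) = 0")
        case True then show ?thesis using mh0 by (simp add: t_def)
      next
        case False then show ?thesis using mhn a2 by simp
      qed
      define W where "W = \<alpha> *\<^sub>R mh + t *\<^sub>R v"
      define w where "w = c + W"
      have wc: "w - c = W" by (simp add: w_def)
      have amhM: "\<alpha> *\<^sub>R mh \<in> M" using mh SM' by (simp add: subspace_scale)
      have "(norm W)\<^sup>2 = (norm (\<alpha> *\<^sub>R mh))\<^sup>2 + (norm (t *\<^sub>R v))\<^sup>2"
        unfolding W_def by (rule pyth) (use vM[OF amhM] in simp)
      also have "\<dots> = r\<^sup>2" using amh nv tp by (simp add: power_mult_distrib)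
      finally have nW: "norm W = r" using rpos by (simp add: power2_eq_iff_nonneg)
      have wsph: "w \<in> sphere c r" unfolding sph wc by (rule nW)
      have WA': "W \<in> LL A'" unfolding W_def using mh MA' vA' SA'
        by (auto intro!: subspace_add subspace_scale)
      have Kq: "(qn (LL B'') W)\<^sup>2 = \<alpha>\<^sup>2 * (qn (LL B'') mh)\<^sup>2 + t\<^sup>2" if "B'' \<subseteq> VV" "LL B'' \<subseteq> M" for B''
      proof -
        have "(qn (LL B'') W)\<^sup>2 = (qn (LL B'') (\<alpha> *\<^sub>R mh))\<^sup>2 + (norm (t *\<^sub>R v))\<^sup>2"
          unfolding W_def using vM by (intro qn_sub[OF LL_subspace[OF that(1)] SM' that(2) amhM]) simp
        then show ?thesis using qn_scale[OF LL_subspace[OF that(1)], of \<alpha> mh] nv tp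
          by (simp add: power_mult_distrib)
      qed
      have Kp: "qn (LL B'') W = t * qn (LL B'') v" "qn (LL B'') \<Omega> = \<delta> * qn (LL B'') v"
        if "B'' \<subseteq> VV" "M \<subseteq> LL B''" for B''
      proof -
        show "qn (LL B'') W = t * qn (LL B'') v" unfolding W_def
          using K2[OF that amhM, of t v] tp by simp
        have "qn (LL B'') \<Omega> = qn (LL B'') (pr M \<Omega> + \<delta> *\<^sub>R v)" using \<Omega>split by simp
        also have "\<dots> = \<delta> * qn (LL B'') v" using K2[OF that prM, of \<delta> v] \<delta>p by simp
        finally show "qn (LL B'') \<Omega> = \<delta> * qn (LL B'') v" .
      qed
      note KA = Kp[OF AV MA]
      have qvA: "0 < qn (LL A) v"
      proof -
        have "qn (LL A) v \<noteq> 0"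
        proof
          assume "qn (LL A) v = 0"
          then have "v \<in> LL A" using qn_zero_iff[OF SA] by simp
          then have "v \<in> M" using vA' M_eq by simp
          then have "inner v v = 0" using vM by simp
          then show False using nv by simp
        qed
        then show ?thesis using qn_nonneg[of "LL A" v] by simp
      qed
      have dAO: "qn (LL A) \<Omega> < 53/16 * eps i"
      proof -
        have "qn (LL A) \<Omega> \<le> qn (LL A) Y + norm (\<Omega> - Y)" by (rule qn_lip[OF SA])
        also have "qn (LL A) Y = dd A y" by (simp add: dd_def Y_def)
        also have "norm (\<Omega> - Y) = norm (Y - \<Omega>)" by (rule norm_minus_commute)
        finally show ?thesis using h2 dYO' by simp
      qed
      have dAW: "qn (LL A) W < 6 * eps i"
      proof -
        have "qn (LL A) W = t * qn (LL A) v" using KA(1) .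
        also have "\<dots> \<le> (5/3 * \<delta>) * qn (LL A) v" using t53 qvA by (simp add: mult_right_mono)
        also have "\<dots> = 5/3 * qn (LL A) \<Omega>" using KA(2) by simp
        also have "\<dots> < 5/3 * (53/16 * eps i)" using dAO by simp
        also have "\<dots> \<le> 6 * eps i" using ei by simp
        finally show ?thesis .
      qed
      have deepw: "eps (lv B'' - 1) \<le> dd B'' w"
        if B'': "B'' \<subseteq> VV" "LL B'' \<subset> LL A'" "1 \<le> lv B''" for B''
      proof -
        define eb where "eb = eps (lv B'' - 1)"
        have lvB: "lv B'' < lv A'" using lv_psub[OF B''(1) A'V B''(2)] .
        then have bi: "lv B'' - 1 < i" and lvb: "lv B'' = Suc (lv B'' - 1)" using lvA' B''(3) by auto
        have ebp: "0 < eb" using epos bi i by (simp add: eb_def)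
        have ebr: "eb \<le> r" using eps_r13[of "lv B'' - 1"] bi i rpos by (simp add: eb_def)
        have ieb: "eps i \<le> eb / 13" using eps_lt13[of "lv B'' - 1" i] bi i by (simp add: eb_def)
        have ddw: "dd B'' w = qn (LL B'') W" by (simp add: dd_def wc)
        show ?thesis
        proof (cases "LL B'' \<subseteq> M")
          case True
          note Kq' = Kq[OF B''(1) True]
          have lvM1: "lv (A' \<union> A) \<noteq> 0" using lv_mono[OF B''(1) UV] True B''(3) by (simp add: M_def)
          show ?thesis
          proof (cases "LL B'' = M")
            case True
            then have "qn (LL B'') mh = 0" using qn_in[OF SM' mh] by simp
            then have "(qn (LL B'') W)\<^sup>2 = t\<^sup>2" using Kq' by simp
            then have "qn (LL B'') W = t" using tp qn_nonneg[of "LL B''" W] by (simp add: power2_eq_iff_nonneg)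
            moreover have "lv B'' = lv (A' \<union> A)" using True by (simp add: lv_def M_def)
            ultimately show ?thesis using te3[OF lvM1] ddw by (simp add: e3_def)
          next
            case False
            then have ps: "LL B'' \<subset> M" using \<open>LL B'' \<subseteq> M\<close> by auto
            have d1: "eb \<le> r * qn (LL B'') mh" using deepm[OF B''(1) ps B''(3)] by (simp add: eb_def)
            have "(qn (LL B'') W)\<^sup>2 = (r\<^sup>2 - t\<^sup>2) / r\<^sup>2 * (r * qn (LL B'') mh)\<^sup>2 + t\<^sup>2"
              using Kq' a2 rpos by (simp add: power_mult_distrib)
            then have "eb \<le> qn (LL B'') W"
              using deep_arith[OF rpos _ tr _ ebr d1 qn_nonneg] tp ebp by simp
            then show ?thesis using ddw by (simp add: eb_def)
          qed
        next
          case nBM: False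
          show ?thesis
          proof (cases "M \<subseteq> LL B''")
            case True
            then have psM: "M \<subset> LL B''" using nBM by auto
            have s2: "5/4 * eb \<le> dd B'' y" using step2[OF B''(1) psM B''(2)] by (simp add: eb_def)
            have "dd B'' y \<le> qn (LL B'') \<Omega> + norm (Y - \<Omega>)"
              using qn_lip[OF LL_subspace[OF B''(1)], of Y \<Omega>] by (simp add: dd_def Y_def)
            then have "5/4 * eb - 21/16 * eps i \<le> qn (LL B'') \<Omega>" using s2 dYO' by simp
            moreover have "eb \<le> 5/4 * eb - 21/16 * eps i" using ieb ebp by simp
            ultimately have "eb \<le> qn (LL B'') \<Omega>" by simp
            also have "\<dots> = \<delta> * qn (LL B'') v" using Kp(2)[OF B''(1) True] .
            also have "\<dots> \<le> t * qn (LL B'') v" using t\<delta> qn_nonneg[of "LL B''" v] by (simp add: mult_right_mono)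
            also have "\<dots> = qn (LL B'') W" using Kp(1)[OF B''(1) True] by simp
            finally show ?thesis using ddw by (simp add: eb_def)
          next
            case nMB: False
            show ?thesis
            proof (rule ccontr)
              assume "\<not> ?thesis"
              then have hw1: "dd B'' w < eb" by (simp add: eb_def)
              have Nb: "Nst (lv B'' - 1)" using IH bi by blast
              have hw1': "dd B'' w < 5/4 * eps (lv B'' - 1)" using hw1 ebp by (simp add: eb_def)
              have hw2: "dd A w < 2 * eps (lv B'' - 1)"
                using dAW ieb ebp by (simp add: dd_def wc eb_def)
              have nBA: "\<not> LL B'' \<subseteq> LL A" using nBM B''(2) M_eq by auto
              note R = NstD[OF Nb wsph B''(1) AV lvb hw1' hw2 nBA]
              have BA: "B'' \<union> A \<subseteq> VV" using B''(1) AV by simp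
              have L5M: "LL (B'' \<union> A) \<subset> M" using nMB B''(2) M_eq by (auto simp: LL_Un)
              have "lv (B'' \<union> A) < lv (A' \<union> A)" using lv_psub[OF BA UV] L5M by (simp add: M_def)
              then have i5: "lv (B'' \<union> A) - 1 < n" using lvMA' lvA' i by simp
              define e5 where "e5 = eps (lv (B'' \<union> A) - 1)"
              have e5p: "0 < e5" using epos[OF i5] by (simp add: e5_def)
              have e5r: "e5 \<le> r" using eps_r13[OF i5] rpos by (simp add: e5_def)
              have d1: "e5 \<le> r * qn (LL (B'' \<union> A)) mh"
                using deepm[OF BA L5M R(1)] by (simp add: e5_def)
              have "(qn (LL (B'' \<union> A)) W)\<^sup>2 = (r\<^sup>2 - t\<^sup>2) / r\<^sup>2 * (r * qn (LL (B'' \<union> A)) mh)\<^sup>2 + t\<^sup>2"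
                using Kq[OF BA] L5M a2 rpos by (simp add: power_mult_distrib)
              then have "e5 \<le> qn (LL (B'' \<union> A)) W"
                using deep_arith[OF rpos _ tr _ e5r d1 qn_nonneg] tp e5p by simp
              then show False using R(2) e5p by (simp add: dd_def wc e5_def)
            qed
          qed
        qed
      qed
      have wO: "w \<in> Omega c r VV eps i"
        using Omega_intro[OF IHN i A'V lvA' wsph] WA' deepw by (simp add: wc)
      have "W \<notin> LL A" using qn_zero_iff[OF SA, of W] KA(1) tp qvA by simp
      then have "6 * eps i \<le> dd A w" using sep[OF wO i AV Ane] by (simp add: wc)
      then show False using dAW by (simp add: dd_def wc)
    qed
    have "dd (A' \<union> A) y = qn M Y" by (simp add: dd_def M_def Y_def)
    also have "\<dots> \<le> qn M \<Omega> + norm (Y - \<Omega>)" by (rule qn_lip[OF SM'])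
    also have "\<dots> < 3/5 * e3 + 21/16 * eps i" using SC dYO' by (simp add: \<delta>_def)
    also have "\<dots> \<le> 3/5 * e3 + 21/16 * (e3 / 13)" using e3i SC by simp
    also have "\<dots> < 3/4 * e3" using e3p SC by simp
    finally show ?thesis using SC by (simp add: e3_def)
  qed
qed

end



lemma arith_u:
  fixes D X e e5 :: real
  assumes "0 \<le> X" "X < 3/4 * e5" "0 \<le> e" "e \<le> e5 / 13" "D\<^sup>2 \<le> X\<^sup>2 + e\<^sup>2" "0 \<le> D"
  shows "D < e5"
proof -
  have "X\<^sup>2 < (3/4 * e5)\<^sup>2" using assms power_strict_mono[of X "3/4*e5" 2] by simp
  moreover have "e\<^sup>2 \<le> (e5/13)\<^sup>2" using assms power_mono[of e "e5/13" 2] by simp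
  ultimately have "D\<^sup>2 < (3/4 * e5)\<^sup>2 + (e5/13)\<^sup>2" using assms(5) by simp
  also have "\<dots> \<le> e5\<^sup>2" by (simp add: power2_eq_square)
  finally have "D\<^sup>2 < e5\<^sup>2" .
  moreover have "0 \<le> e5" using assms(1,2) by simp
  ultimately show ?thesis using power_less_imp_less_base[of D 2 e5] by simp
qed

context setting
begin

lemma all_steps: "k < n \<Longrightarrow> Nst k \<and> NEst k"
proof (induction k rule: less_induct)
  case (less k)
  then have IH: "\<forall>j<k. Nst j \<and> NEst j" by auto
  show ?case using N_step[OF IH less.prems] NE_step[OF IH less.prems] by simp
qed

lemma cap_dec:
  assumes A: "A \<subseteq> VV" and p: "p \<in> cap c r A z e"
  obtains t u where "t > 0" "p - c = t *\<^sub>R (z - c) + u" "\<And>l. l \<in> LL A \<Longrightarrow> inner l u = 0"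
    "norm u < e" "p \<in> sphere c r"
  using p unfolding cap_def W_eq by auto

lemma bd_dec:
  assumes A: "A \<subseteq> VV" and p: "p \<in> cap_rel_boundary c r A z e"
  obtains t u where "t > 0" "p - c = t *\<^sub>R (z - c) + u" "\<And>l. l \<in> LL A \<Longrightarrow> inner l u = 0"
    "norm u = e" "p \<in> sphere c r"
  using p unfolding cap_rel_boundary_def W_eq by auto

lemma dd_dec:
  assumes A: "A \<subseteq> VV" and Z: "z - c \<in> LL A" and p: "p - c = t *\<^sub>R (z - c) + u"
    and u: "\<And>l. l \<in> LL A \<Longrightarrow> inner l u = 0"
  shows "pr (LL A) (p - c) = t *\<^sub>R (z - c)" "dd A p = norm u"
proof -
  show pe: "pr (LL A) (p - c) = t *\<^sub>R (z - c)"
    using Z u LL_subspace[OF A] by (intro pr_unique) (auto simp: p subspace_scale)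
  have "dd A p = norm ((p - c) - pr (LL A) (p - c))" by (simp add: dd_def qn_def)
  also have "\<dots> = norm u" using pe p by simp
  finally show "dd A p = norm u" .
qed

lemma uniq:
  assumes k: "k < n" and P1: "cap_prop c r VV eps x k A1 z1" and P2: "cap_prop c r VV eps x k A2 z2"
  shows "Salpha c r A1 = Salpha c r A2 \<and> z1 = z2"
proof -
  have A1: "A1 \<subseteq> VV" "gdim A1 = int k" "z1 \<in> Salpha c r A1" "x \<in> cap c r A1 z1 (eps k)"
    and bd1: "cap_rel_boundary c r A1 z1 (eps k) \<inter> (\<Union>j<k. bigT c r VV eps j) = {}"
    using P1 unfolding cap_prop_def by auto
  have A2: "A2 \<subseteq> VV" "gdim A2 = int k" "z2 \<in> Salpha c r A2" "x \<in> cap c r A2 z2 (eps k)"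
    using P2 unfolding cap_prop_def by auto
  have lv1: "lv A1 = Suc k" using gdim_lv[OF A1(1)] A1(2) by simp
  have lv2: "lv A2 = Suc k" using gdim_lv[OF A2(1)] A2(2) by simp
  have Z1: "z1 - c \<in> LL A1" "norm (z1 - c) = r" using A1(3) by (auto simp: Salpha_iff dist_norm norm_minus_commute)
  have Z2: "z2 - c \<in> LL A2" "norm (z2 - c) = r" using A2(3) by (auto simp: Salpha_iff dist_norm norm_minus_commute)
  obtain t1 u1 where c1: "t1 > 0" "x - c = t1 *\<^sub>R (z1 - c) + u1" "\<And>l. l \<in> LL A1 \<Longrightarrow> inner l u1 = 0"
    "norm u1 < eps k" "x \<in> sphere c r" using cap_dec[OF A1(1) A1(4)] by blast
  obtain t2 u2 where c2: "t2 > 0" "x - c = t2 *\<^sub>R (z2 - c) + u2" "\<And>l. l \<in> LL A2 \<Longrightarrow> inner l u2 = 0"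
    "norm u2 < eps k" using cap_dec[OF A2(1) A2(4)] by blast
  note d1 = dd_dec[OF A1(1) Z1(1) c1(2) c1(3)]
  note d2 = dd_dec[OF A2(1) Z2(1) c2(2) c2(3)]
  have ek: "0 < eps k" using epos[OF k] .
  show ?thesis
  proof (cases "LL A1 = LL A2")
    case True
    have V: "Valpha A1 = Valpha A2" using True mem_LL by blast
    have "t1 *\<^sub>R (z1 - c) = t2 *\<^sub>R (z2 - c)" using d1(1) d2(1) True by simp
    moreover have "t1 = t2"
    proof -
      have "norm (t1 *\<^sub>R (z1 - c)) = norm (t2 *\<^sub>R (z2 - c))" using calculation by simp
      then have "t1 * r = t2 * r" using Z1 Z2 c1 c2 by simp
      then show ?thesis using rpos by simp
    qed
    ultimately have "z1 - c = z2 - c" using c1(1) by simp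
    then show ?thesis using V by (simp add: Salpha_def)
  next
    case False
    have ns: "\<not> LL A1 \<subseteq> LL A2"
    proof
      assume "LL A1 \<subseteq> LL A2"
      then have "LL A1 = LL A2" using LL_eq[OF A1(1) A2(1)] lv1 lv2 by simp
      then show False using False by simp
    qed
    have h1: "dd A1 x < 5/4 * eps k" using d1(2) c1(4) ek by simp
    have h2: "dd A2 x < 2 * eps k" using d2(2) c2(4) ek by simp
    note R = NstD[OF all_steps[OF k, THEN conjunct1] c1(5) A1(1) A2(1) lv1 h1 h2 ns]
    have U: "A1 \<union> A2 \<subseteq> VV" using A1 A2 by simp
    have psub: "LL (A1 \<union> A2) \<subset> LL A1" using ns by (auto simp: LL_Un)
    then have "lv (A1 \<union> A2) < lv A1" using lv_psub[OF U A1(1)] by simp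
    then have bk: "lv (A1 \<union> A2) - 1 < k" and lvb: "lv (A1 \<union> A2) = Suc (lv (A1 \<union> A2) - 1)"
      using lv1 R(1) by auto
    define e5 where "e5 = eps (lv (A1 \<union> A2) - 1)"
    have eke5: "eps k \<le> e5 / 13" unfolding e5_def using bk k by (intro eps_lt13) auto
    have e5p: "0 < e5" unfolding e5_def using bk k by (intro epos) auto
    have ekr: "eps k < r" using eps_r13[OF k] rpos by simp
    have nU: "LL A1 \<noteq> UNIV"
    proof
      assume "LL A1 = UNIV"
      then have "lv A1 = n + 1" using dimA by (simp add: lv_def)
      then show False using lv1 k by simp
    qed
    have e1: "span (LL A1) = LL A1" using LL_subspace[OF A1(1)] by simp
    have e2: "span (UNIV::'a set) = UNIV" by simp
    have "span (LL A1) \<subset> span UNIV" unfolding e1 e2 using nU by auto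
    then obtain x0 where x0: "x0 \<noteq> 0" "\<And>y. y \<in> span (LL A1) \<Longrightarrow> orthogonal x0 y"
      using orthogonal_to_subspace_exists_gen by metis
    define u where "u = (eps k / norm x0) *\<^sub>R x0"
    have nu: "norm u = eps k" using x0 ek by (simp add: u_def)
    have uo: "\<And>l. l \<in> LL A1 \<Longrightarrow> inner l u = 0"
      using x0 by (auto simp: u_def orthogonal_def inner_commute span_base)
    define t' where "t' = sqrt (r\<^sup>2 - (eps k)\<^sup>2) / r"
    have ekr2: "(eps k)\<^sup>2 < r\<^sup>2" using ekr ek by (simp add: power_strict_mono)
    have t'p: "t' > 0" using ekr2 rpos by (simp add: t'_def)
    define P where "P = t' *\<^sub>R (z1 - c) + u"
    define p where "p = c + P"
    have pc: "p - c = P" by (simp add: p_def)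
    have "(norm P)\<^sup>2 = (norm (t' *\<^sub>R (z1 - c)))\<^sup>2 + (norm u)\<^sup>2"
      unfolding P_def by (rule pyth) (use uo Z1 LL_subspace[OF A1(1)] in \<open>simp add: subspace_scale\<close>)
    also have "\<dots> = r\<^sup>2" using Z1 nu rpos ekr2 t'p
      by (simp add: power_mult_distrib t'_def power_divide)
    finally have nP: "norm P = r" using rpos by (simp add: power2_eq_iff_nonneg)
    have psph: "p \<in> sphere c r" unfolding sph pc by (rule nP)
    have "p \<in> cap_rel_boundary c r A1 z1 (eps k)"
      unfolding cap_rel_boundary_def W_eq using psph t'p pc uo nu
      by (intro CollectI conjI exI[of _ t'] exI[of _ u]) (auto simp: P_def)
    moreover have "p \<in> bigT c r VV eps (lv (A1 \<union> A2) - 1)"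
    proof -
      have sub: "LL (A1 \<union> A2) \<subseteq> LL A1" using psub by auto
      have "(qn (LL (A1 \<union> A2)) P)\<^sup>2 \<le> (qn (LL (A1 \<union> A2)) (x - c))\<^sup>2 + (norm u)\<^sup>2"
        using mono_cap(2)[OF LL_subspace[OF U] LL_subspace[OF A1(1)] sub Z1 rpos c1(3) uo c1(2) _ P_def nP]
          c1(4) c1(5) nu by (simp add: dist_norm norm_minus_commute)
      then have Dq: "(qn (LL (A1 \<union> A2)) P)\<^sup>2 \<le> (dd (A1 \<union> A2) x)\<^sup>2 + (eps k)\<^sup>2"
        using nu by (simp add: dd_def)
      have "qn (LL (A1 \<union> A2)) P < e5"
        using arith_u[OF dd_nonneg R(2)[folded e5_def] less_imp_le[OF ek] eke5 Dq qn_nonneg] .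
      then have "dd (A1 \<union> A2) p < e5" by (simp add: dd_def pc)
      then have "\<exists>B. B \<subseteq> VV \<and> lv B = Suc (lv (A1 \<union> A2) - 1) \<and> p \<in> sphere c r \<and> dd B p < eps (lv (A1 \<union> A2) - 1)"
        using U lvb psph unfolding e5_def by blast
      then show ?thesis by (simp only: bigT_iff)
    qed
    ultimately show ?thesis using bd1 bk by blast
  qed
qed

lemma exist:
  assumes x: "x \<in> (\<Union>j<n. bigT c r VV eps j)"
  shows "\<exists>k<n. \<exists>A z. cap_prop c r VV eps x k A z"
proof -
  define j where "j = (LEAST j. j < n \<and> x \<in> bigT c r VV eps j)"
  have ex: "\<exists>j. j < n \<and> x \<in> bigT c r VV eps j" using x by auto
  have j: "j < n" "x \<in> bigT c r VV eps j" using LeastI_ex[OF ex] unfolding j_def by auto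
  have jmin: "\<And>i. i < j \<Longrightarrow> x \<notin> bigT c r VV eps i"
    using not_less_Least j(1) unfolding j_def by (metis order.strict_trans)
  obtain A where A: "A \<subseteq> VV" "lv A = Suc j" "x \<in> sphere c r" "dd A x < eps j"
    using j(2) bigT_iff by blast
  note SA = LL_subspace[OF A(1)]
  define X where "X = x - c"
  have nX: "norm X = r" using A(3) by (simp add: X_def dist_norm norm_minus_commute)
  have qr: "qn (LL A) X < r" using A(4) eps_r13[OF j(1)] rpos by (simp add: dd_def X_def)
  define a where "a = pr (LL A) X"
  note Rd = radial[OF SA nX qr, folded a_def]
  define z where "z = c + (r / norm a) *\<^sub>R a"
  have zc: "z - c = (r / norm a) *\<^sub>R a" by (simp add: z_def)
  have na: "norm a > 0" using Rd(1) by simp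
  define t where "t = norm a / r"
  have tp: "t > 0" using na rpos by (simp add: t_def)
  have ta: "t *\<^sub>R (z - c) = a" using na rpos by (simp add: zc t_def)
  define u where "u = X - a"
  have Xd: "x - c = t *\<^sub>R (z - c) + u" by (simp add: ta u_def X_def)
  have uo: "\<And>l. l \<in> LL A \<Longrightarrow> inner l u = 0" using pr(2)[OF SA] by (simp add: u_def a_def)
  have nu: "norm u = dd A x" by (simp add: u_def a_def dd_def qn_def X_def)
  have Z: "z - c \<in> LL A" "norm (z - c) = r" using Rd zc by auto
  have gd: "gdim A = int j" using gdim_lv[OF A(1)] A(2) by simp
  have zS: "z \<in> Salpha c r A" unfolding Salpha_iff sph using Z by simp
  have xcap: "x \<in> cap c r A z (eps j)"
    unfolding cap_def W_eq using A(3) A(4) tp Xd uo nu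
    by (intro CollectI conjI exI[of _ t] exI[of _ u]) auto
  have bd: "cap_rel_boundary c r A z (eps j) \<inter> (\<Union>i<j. bigT c r VV eps i) = {}"
  proof (rule ccontr)
    assume "\<not> ?thesis"
    then obtain p i where p: "p \<in> cap_rel_boundary c r A z (eps j)" and i: "i < j" "p \<in> bigT c r VV eps i"
      by blast
    obtain t' u' where b: "t' > 0" "p - c = t' *\<^sub>R (z - c) + u'" "\<And>l. l \<in> LL A \<Longrightarrow> inner l u' = 0"
      "norm u' = eps j" "p \<in> sphere c r" using bd_dec[OF A(1) p] by blast
    have nP: "norm (p - c) = r" using b(5) by (simp add: dist_norm norm_minus_commute)
    have ddp: "dd A p = eps j" using dd_dec[OF A(1) Z(1) b(2) b(3)] b(4) by simp
    obtain B where B: "B \<subseteq> VV" "lv B = Suc i" "dd B p < eps i" using i(2) bigT_iff by blast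
    have iN: "i < n" using i j by simp
    have le: "norm u \<le> norm u'" using nu A(4) b(4) by simp
    show False
    proof (cases "LL B \<subseteq> LL A")
      case True
      have "qn (LL B) (x - c) \<le> qn (LL B) (p - c)"
        using mono_cap(1)[OF LL_subspace[OF B(1)] SA True Z rpos uo b(3) Xd _ b(2) nP le] nX
        by (simp add: X_def)
      then have "dd B x < eps i" using B(3) by (simp add: dd_def)
      then have "x \<in> bigT c r VV eps i" using bigT_iff B A(3) by blast
      then show False using jmin i by blast
    next
      case False
      have ei: "0 < eps i" using epos[OF iN] .
      have h1: "dd B p < 5/4 * eps i" using B(3) ei by simp
      have "eps j \<le> eps i / 13" using eps_lt13 i j by blast
      then have h2: "dd A p < 2 * eps i" using ddp ei by simp
      note R = NstD[OF all_steps[OF iN, THEN conjunct1] b(5) B(1) A(1) B(2) h1 h2 False]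
      have U: "B \<union> A \<subseteq> VV" using A B by simp
      have sub: "LL (B \<union> A) \<subseteq> LL A" by (auto simp: LL_Un)
      have "lv (B \<union> A) \<le> lv B" using lv_mono[OF U B(1)] by (auto simp: LL_Un)
      then have bi: "lv (B \<union> A) - 1 < j" and lvb: "lv (B \<union> A) = Suc (lv (B \<union> A) - 1)"
        using B(2) i R(1) by auto
      have e5p: "0 < eps (lv (B \<union> A) - 1)" using bi j by (intro epos) auto
      have "qn (LL (B \<union> A)) (x - c) \<le> qn (LL (B \<union> A)) (p - c)"
        using mono_cap(1)[OF LL_subspace[OF U] SA sub Z rpos uo b(3) Xd _ b(2) nP le] nX
        by (simp add: X_def)
      then have "dd (B \<union> A) x < eps (lv (B \<union> A) - 1)" using R(2) e5p by (simp add: dd_def)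
      then have "x \<in> bigT c r VV eps (lv (B \<union> A) - 1)" using bigT_iff U lvb A(3) by blast
      then show False using jmin bi by blast
    qed
  qed
  have "cap_prop c r VV eps x j A z" unfolding cap_prop_def using A(1) gd zS xcap bd by simp
  then show ?thesis using j(1) by blast
qed

end

theorem lemma5p5:
  fixes c :: "'a::euclidean_space" and r :: real and VV :: "'a set set"
    and n :: nat and eps :: "nat \<Rightarrow> real"
  assumes "DIM('a) = n + 1"
    and "r > 0"
    and "finite VV"
    and "\<forall>V\<in>VV. affine V \<and> aff_dim V = int n \<and> c \<in> V"
    and "good_eps c r VV n eps"
    and "x \<in> (\<Union>j<n. bigT c r VV eps j)"
  shows "\<exists>k<n. (\<exists>A z. cap_prop c r VV eps x k A z)
           \<and> (\<forall>k'<n. (\<exists>A z. cap_prop c r VV eps x k' A z) \<longrightarrow> k' \<le> k)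
           \<and> (\<forall>A1 z1 A2 z2. cap_prop c r VV eps x k A1 z1 \<and> cap_prop c r VV eps x k A2 z2
                \<longrightarrow> Salpha c r A1 = Salpha c r A2 \<and> z1 = z2)"
proof -
  interpret S: setting c r VV n eps
    using assms by unfold_locales auto
  define K where "K = {k. k < n \<and> (\<exists>A z. cap_prop c r VV eps x k A z)}"
  have fin: "finite K" unfolding K_def by simp
  have ne: "K \<noteq> {}" using S.exist[OF assms(6)] unfolding K_def by blast
  define km where "km = Max K"
  have kmK: "km \<in> K" using Max_in[OF fin ne] unfolding km_def .
  have kmax: "\<And>k'. k' \<in> K \<Longrightarrow> k' \<le> km" using Max_ge[OF fin] unfolding km_def by blast
  have kmn: "km < n" using kmK unfolding K_def by simp
  show ?thesis
  proof (rule exI[of _ km], intro conjI)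
    show "km < n" by (rule kmn)
    show "\<exists>A z. cap_prop c r VV eps x km A z" using kmK unfolding K_def by simp
    show "\<forall>k'<n. (\<exists>A z. cap_prop c r VV eps x k' A z) \<longrightarrow> k' \<le> km"
      using kmax unfolding K_def by blast
    show "\<forall>A1 z1 A2 z2. cap_prop c r VV eps x km A1 z1 \<and> cap_prop c r VV eps x km A2 z2
                \<longrightarrow> Salpha c r A1 = Salpha c r A2 \<and> z1 = z2"
      using S.uniq[OF kmn] by blast
  qed
qed

end
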